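(* Let $m\ge 2$ be even and let $\mathcal{X}$ be the $2^m$-QAM constellation, i.e. the Cartesian product of two $2^{m/2}$-PAM constellations (in-phase and quadrature), labeled by the binary reflected Gray mapping (the Cartesian product of binary reflected Gray mappings of the two PAM components), with $b_j(x)$ the $j$-th label bit of $x$. Consider the complex AWGN channel $Y=\sqrt{\mathsf{snr}}\,X+Z$, with $Z$ a zero-mean unit-variance circularly symmetric complex Gaussian. For bit distributions $P_{B_1},\dots,P_{B_m}$ on $\{0,1\}$, let the symbol $X$ have distribution $\prod_{j=1}^mP_{B_j}(b_j(x))$ on the points of the constellation, normalized (translated and scaled) so that $\mathbb{E}[X]=0$ and $\mathbb{E}[|X|^2]=1$. Define the shaped BICM capacity $$C_{\rm bicm}(\mathsf{snr})=\sup_{P_{B_1},\dots,P_{B_m}}\sum_{j=1}^m I(B_j;Y)$$ (mutual informations in nats). Then, as $\mathsf{snr}\to0$, $$C_{\rm bicm}(\mathsf{snr})=c_1\,\mathsf{snr}+c_2\,\mathsf{snr}^2+o(\mathsf{snr}^2)\quad\text{with } c_1=1,\ c_2=-\tfrac12,$$ i.e. BICM with shaping over QAM with binary reflected Gray mapping is first- and second-order optimal in the wideband regime.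
   Context: The binary reflected Gray mapping for $k$ bits is built recursively from that for $k-1$ bits by prefixing 0 to the list of $(k-1)$-bit labels and prefixing 1 to the same list in reverse order. A scheme with rate expansion $R(\mathsf{snr})=c_1\mathsf{snr}+c_2\mathsf{snr}^2+o(\mathsf{snr}^2)$ is called first- and second-order optimal if $c_1=1$ and $c_2=-1/2$ (the coefficients of the Gaussian channel capacity $\log(1+\mathsf{snr})$). *)

theory Defs
  imports "HOL-Analysis.Analysis" "HOL-Library.Landau_Symbols"
begin

text \<open>List of k-bit labels; True encodes bit 1.  The (k+1)-bit list prefixes False to the
k-bit list and True to the reversed k-bit list.\<close>
fun brgc :: "nat \<Rightarrow> bool list list" where
  "brgc 0 = [[]]"
| "brgc (Suc k) = map (Cons False) (brgc k) @ map (Cons True) (rev (brgc k))"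

definition pam_point :: "nat \<Rightarrow> nat \<Rightarrow> real" where
  "pam_point n i = 2 * real i - (2 ^ n - 1)"

definition qam_idx :: "nat \<Rightarrow> (nat \<times> nat) set" where
  "qam_idx n = {..<2 ^ n} \<times> {..<2 ^ n}"

definition qam_point :: "nat \<Rightarrow> nat \<times> nat \<Rightarrow> complex" where
  "qam_point n k = Complex (pam_point n (fst k)) (pam_point n (snd k))"

definition qam_label :: "nat \<Rightarrow> nat \<times> nat \<Rightarrow> bool list" where
  "qam_label n k = brgc n ! fst k @ brgc n ! snd k"

section \<open>Shaped input distribution (p j = P(B_j = 1)), normalisation\<close>

definition sym_prob :: "nat \<Rightarrow> (nat \<Rightarrow> real) \<Rightarrow> nat \<times> nat \<Rightarrow> real" where
  "sym_prob m p k = (\<Prod>j<m. if qam_label (m div 2) k ! j then p j else 1 - p j)"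

definition sym_mean :: "nat \<Rightarrow> (nat \<Rightarrow> real) \<Rightarrow> complex" where
  "sym_mean m p = (\<Sum>k\<in>qam_idx (m div 2). of_real (sym_prob m p k) * qam_point (m div 2) k)"

definition sym_var :: "nat \<Rightarrow> (nat \<Rightarrow> real) \<Rightarrow> real" where
  "sym_var m p = (\<Sum>k\<in>qam_idx (m div 2). sym_prob m p k * (cmod (qam_point (m div 2) k - sym_mean m p))\<^sup>2)"

definition norm_point :: "nat \<Rightarrow> (nat \<Rightarrow> real) \<Rightarrow> nat \<times> nat \<Rightarrow> complex" where
  "norm_point m p k = (qam_point (m div 2) k - sym_mean m p) / of_real (sqrt (sym_var m p))"

definition shaping_ok :: "nat \<Rightarrow> (nat \<Rightarrow> real) \<Rightarrow> bool" where
  "shaping_ok m p \<longleftrightarrow> (\<forall>j<m. 0 \<le> p j \<and> p j \<le> 1) \<and> sym_var m p > 0"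

definition gauss_c :: "complex \<Rightarrow> real" where
  "gauss_c z = exp (- (cmod z)\<^sup>2) / pi"

definition joint_dens :: "nat \<Rightarrow> (nat \<Rightarrow> real) \<Rightarrow> real \<Rightarrow> nat \<Rightarrow> bool \<Rightarrow> complex \<Rightarrow> real" where
  "joint_dens m p snr j b y =
     (\<Sum>k\<in>{k\<in>qam_idx (m div 2). qam_label (m div 2) k ! j = b}.
        sym_prob m p k * gauss_c (y - of_real (sqrt snr) * norm_point m p k))"

definition bit_prob :: "nat \<Rightarrow> (nat \<Rightarrow> real) \<Rightarrow> nat \<Rightarrow> bool \<Rightarrow> real" where
  "bit_prob m p j b = (\<Sum>k\<in>{k\<in>qam_idx (m div 2). qam_label (m div 2) k ! j = b}. sym_prob m p k)"

definition out_dens :: "nat \<Rightarrow> (nat \<Rightarrow> real) \<Rightarrow> real \<Rightarrow> complex \<Rightarrow> real" where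
  "out_dens m p snr y =
     (\<Sum>k\<in>qam_idx (m div 2). sym_prob m p k * gauss_c (y - of_real (sqrt snr) * norm_point m p k))"

definition bit_mi :: "nat \<Rightarrow> (nat \<Rightarrow> real) \<Rightarrow> real \<Rightarrow> nat \<Rightarrow> real" where
  "bit_mi m p snr j =
     (\<Sum>b\<in>UNIV. \<integral>y. joint_dens m p snr j b y *
          ln (joint_dens m p snr j b y / (bit_prob m p j b * out_dens m p snr y)) \<partial>lborel)"

definition C_bicm :: "nat \<Rightarrow> real \<Rightarrow> real" where
  "C_bicm m snr = Sup ((\<lambda>p. \<Sum>j<m. bit_mi m p snr j) ` {p. shaping_ok m p})"

end

theory Submission
  imports Defs "HOL-Probability.Probability" "HOL-Real_Asymp.Real_Asymp"
begin

lemma box_complex_vimage: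
  "(\<lambda>(u,v). Complex u v) -` box l h = {Re l<..<Re h} \<times> {Im l<..<Im h}"
  by (auto simp: box_def Basis_complex_def)

lemma lborel_complex:
  "(lborel :: complex measure) = distr (lborel \<Otimes>\<^sub>M lborel) borel (\<lambda>(u,v). Complex u v)"
proof (rule lborel_eqI)
  fix l h :: complex assume le: "\<And>b. b \<in> Basis \<Longrightarrow> l \<bullet> b \<le> h \<bullet> b"
  have "Re l \<le> Re h" "Im l \<le> Im h" using le[of 1] le[of \<i>] by (auto simp: Basis_complex_def)
  have m: "(\<lambda>(u,v). Complex u v) \<in> measurable (lborel \<Otimes>\<^sub>M lborel) (borel :: complex measure)"
  proof -
    have "(\<lambda>(u,v). Complex u v) = (\<lambda>x. complex_of_real (fst x) + \<i> * complex_of_real (snd x))"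
      by (auto simp: Complex_eq)
    then show ?thesis by simp
  qed
  show "emeasure (distr (lborel \<Otimes>\<^sub>M lborel) borel (\<lambda>(u,v). Complex u v)) (box l h) = (\<Prod>b\<in>Basis. (h - l) \<bullet> b)"
    using \<open>Re l \<le> Re h\<close> \<open>Im l \<le> Im h\<close>
    by (simp add: emeasure_distr[OF m] box_complex_vimage space_pair_measure lborel.emeasure_pair_measure_Times
        Basis_complex_def ennreal_mult)
qed simp

lemma measurable_Complex_pair[measurable]:
  "(\<lambda>x. Complex (fst x) (snd x)) \<in> measurable (lborel \<Otimes>\<^sub>M lborel) (borel :: complex measure)"
proof -
  have "(\<lambda>x. Complex (fst x) (snd x)) = (\<lambda>x. complex_of_real (fst x) + \<i> * complex_of_real (snd x))"
    by (auto simp: Complex_eq)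
  then show ?thesis by simp
qed

lemma lborel_complex':
  "(lborel :: complex measure) = distr (lborel \<Otimes>\<^sub>M lborel) borel (\<lambda>x. Complex (fst x) (snd x))"
  using lborel_complex by (simp add: case_prod_beta')

lemma prod_integrable:
  fixes f h :: "real \<Rightarrow> real"
  assumes f: "integrable lborel f" and h: "integrable lborel h"
  shows "integrable (lborel \<Otimes>\<^sub>M lborel) (\<lambda>x. f (fst x) * h (snd x))"
    and "integral\<^sup>L (lborel \<Otimes>\<^sub>M lborel) (\<lambda>x. f (fst x) * h (snd x)) = integral\<^sup>L lborel f * integral\<^sup>L lborel h"
proof -
  have [measurable]: "f \<in> borel_measurable borel" "h \<in> borel_measurable borel"
    using f h by (auto dest: borel_measurable_integrable)
  show I: "integrable (lborel \<Otimes>\<^sub>M lborel) (\<lambda>x. f (fst x) * h (snd x))"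
  proof (rule lborel_pair.Fubini_integrable)
    show "(\<lambda>x. f (fst x) * h (snd x)) \<in> borel_measurable (lborel \<Otimes>\<^sub>M lborel)" by measurable
    have "(\<lambda>x. \<integral>y. norm (f (fst (x, y)) * h (snd (x, y))) \<partial>lborel) = (\<lambda>x. \<bar>f x\<bar> * (\<integral>y. \<bar>h y\<bar> \<partial>lborel))"
      by (simp add: abs_mult)
    moreover have "integrable lborel (\<lambda>x. \<bar>f x\<bar> * (\<integral>y. \<bar>h y\<bar> \<partial>lborel))"
      using f by (intro integrable_mult_left) auto
    ultimately show "integrable lborel (\<lambda>x. \<integral>y. norm (f (fst (x, y)) * h (snd (x, y))) \<partial>lborel)" by simp
    show "AE x in lborel. integrable lborel (\<lambda>y. f (fst (x, y)) * h (snd (x, y)))"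
      using h by (auto intro!: integrable_mult_right)
  qed
  have "integral\<^sup>L (lborel \<Otimes>\<^sub>M lborel) (\<lambda>x. f (fst x) * h (snd x)) = (\<integral>x. (\<integral>y. f x * h y \<partial>lborel) \<partial>lborel)"
    using lborel_pair.integral_fst'[OF I] by simp
  also have "\<dots> = (\<integral>x. f x * (\<integral>y. h y \<partial>lborel) \<partial>lborel)" by simp
  also have "\<dots> = integral\<^sup>L lborel f * integral\<^sup>L lborel h" by simp
  finally show "integral\<^sup>L (lborel \<Otimes>\<^sub>M lborel) (\<lambda>x. f (fst x) * h (snd x)) = integral\<^sup>L lborel f * integral\<^sup>L lborel h" .
qed

lemma cint_prod:
  fixes f h :: "real \<Rightarrow> real" and F :: "complex \<Rightarrow> real"
  assumes f: "integrable lborel f" and h: "integrable lborel h"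
    and F[measurable]: "F \<in> borel_measurable borel" and eq: "\<And>u v. F (Complex u v) = f u * h v"
  shows "integrable lborel F" and "integral\<^sup>L lborel F = integral\<^sup>L lborel f * integral\<^sup>L lborel h"
proof -
  have e: "(\<lambda>x. F (Complex (fst x) (snd x))) = (\<lambda>x. f (fst x) * h (snd x))" using eq by auto
  show "integrable lborel F"
    by (subst lborel_complex', subst integrable_distr_eq) (use prod_integrable[OF f h] e in auto)
  show "integral\<^sup>L lborel F = integral\<^sup>L lborel f * integral\<^sup>L lborel h"
    by (subst lborel_complex', subst integral_distr) (use prod_integrable[OF f h] e in auto)
qed

definition phi :: "real \<Rightarrow> real \<Rightarrow> real" where
  "phi a u = normal_density a (sqrt (1/2)) u"

lemma sig_pos: "(0::real) < sqrt (1/2)" by simp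

lemma phi_eq: "phi a u = exp (- (u - a)\<^sup>2) / sqrt pi"
  by (simp add: phi_def normal_density_def power2_eq_square real_sqrt_mult)

lemma phi_nonneg: "0 \<le> phi a u" by (simp add: phi_def)
lemma phi_pos: "0 < phi a u" by (simp add: phi_eq)

lemma gauss_c_measurable[measurable]: "gauss_c \<in> borel_measurable borel"
  unfolding gauss_c_def[abs_def] by measurable

lemma gauss_c_pos: "0 < gauss_c z" by (simp add: gauss_c_def)

lemma gauss_c_split: "gauss_c (Complex u v - c) = phi (Re c) u * phi (Im c) v"
proof -
  have "(cmod (Complex u v - c))\<^sup>2 = (u - Re c)\<^sup>2 + (v - Im c)\<^sup>2"
    by (simp add: cmod_power2)
  then show ?thesis
    by (simp add: gauss_c_def phi_eq exp_add[symmetric] exp_diff)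
qed

lemma phi_integrable_central: "integrable lborel (\<lambda>x. phi a x * (x - a) ^ i)"
  unfolding phi_def by (rule integrable_normal_moment[OF sig_pos])

lemma phi_central: "(\<integral>x. phi a x * (x - a) ^ i \<partial>lborel) =
   (if even i then fact i / (4 ^ (i div 2) * fact (i div 2)) else 0)"
proof (cases "even i")
  case True
  then obtain k where i: "i = 2 * k" by auto
  show ?thesis using integral_normal_moment_even[OF sig_pos, of a k] i
    by (simp add: phi_def power2_eq_square)
next
  case False
  then obtain k where i: "i = 2 * k + 1" using oddE by blast
  show ?thesis using integral_normal_moment_odd[OF sig_pos, of a k] i False
    by (simp add: phi_def)
qed

lemma phi_pow_expand: "phi a x * x ^ k = (\<Sum>i\<le>k. of_nat (k choose i) * a ^ (k - i) * (phi a x * (x - a) ^ i))"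
proof -
  have "x ^ k = ((x - a) + a) ^ k" by simp
  also have "\<dots> = (\<Sum>i\<le>k. of_nat (k choose i) * (x - a) ^ i * a ^ (k - i))" by (rule binomial_ring)
  finally show ?thesis by (simp add: sum_distrib_left algebra_simps)
qed

lemma phi_pow_expand': "(\<lambda>x. phi a x * x ^ k) = (\<lambda>x. \<Sum>i\<le>k. of_nat (k choose i) * a ^ (k - i) * (phi a x * (x - a) ^ i))"
  using phi_pow_expand by blast

lemma sum_atMost_6: "(\<Sum>i::nat\<le>6. f i) = f 0 + f 1 + f 2 + f 3 + f 4 + f 5 + (f 6 :: real)"
  by (simp add: eval_nat_numeral)
lemma sum_atMost_4: "(\<Sum>i::nat\<le>4. f i) = f 0 + f 1 + f 2 + f 3 + (f 4 :: real)"
  by (simp add: eval_nat_numeral)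
lemma sum_atMost_2: "(\<Sum>i::nat\<le>2. f i) = f 0 + f 1 + (f 2 :: real)"
  by (simp add: eval_nat_numeral)

lemma choose_vals: "(4::nat) choose 2 = 6" "(6::nat) choose 2 = 15" "(6::nat) choose 4 = 15"
  by (simp_all add: binomial_Suc_Suc eval_nat_numeral)

lemma phi_integrable_pow: "integrable lborel (\<lambda>x. phi a x * x ^ k)"
  unfolding phi_pow_expand' by (auto intro!: phi_integrable_central)

lemma phi_moment: "(\<integral>x. phi a x * x ^ k \<partial>lborel) =
   (\<Sum>i\<le>k. of_nat (k choose i) * a ^ (k - i) * (if even i then fact i / (4 ^ (i div 2) * fact (i div 2)) else 0))"
  unfolding phi_pow_expand' by (simp add: integral_sum phi_integrable_central phi_central)

lemma phi_integrable: "integrable lborel (phi a)"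
  using phi_integrable_pow[of a 0] by simp
lemma phi_int: "(\<integral>x. phi a x \<partial>lborel) = 1"
  using phi_moment[of a 0] by simp
lemma phi_m1: "(\<integral>x. phi a x * x \<partial>lborel) = a"
  using phi_moment[of a 1] by simp
lemma phi_m2: "(\<integral>x. phi a x * x^2 \<partial>lborel) = a^2 + 1/2"
  using phi_moment[of a 2] by (simp add: sum_atMost_2 fact_numeral)
lemma phi_m4: "(\<integral>x. phi a x * x^4 \<partial>lborel) = a^4 + 3 * a^2 + 3/4"
  using phi_moment[of a 4] by (simp add: sum_atMost_4 fact_numeral choose_vals)
lemma phi_m6: "(\<integral>x. phi a x * x^6 \<partial>lborel) = a^6 + 15/2 * a^4 + 45/4 * a^2 + 15/8"
  using phi_moment[of a 6] by (simp add: sum_atMost_6 fact_numeral choose_vals)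

lemma cg_re:
  shows "integrable lborel (\<lambda>y. gauss_c (y - c) * Re y ^ k)"
    and "(\<integral>y. gauss_c (y - c) * Re y ^ k \<partial>lborel) = (\<integral>x. phi (Re c) x * x ^ k \<partial>lborel)"
proof -
  have e: "\<And>u v. gauss_c (Complex u v - c) * Re (Complex u v) ^ k = (phi (Re c) u * u ^ k) * phi (Im c) v"
    by (simp add: gauss_c_split)
  note r = cint_prod[OF phi_integrable_pow[of "Re c" k] phi_integrable[of "Im c"] _ e]
  show "integrable lborel (\<lambda>y. gauss_c (y - c) * Re y ^ k)" by (rule r) measurable
  show "(\<integral>y. gauss_c (y - c) * Re y ^ k \<partial>lborel) = (\<integral>x. phi (Re c) x * x ^ k \<partial>lborel)"
    using r(2) by (simp add: phi_int)
qed

lemma cg_im: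
  shows "integrable lborel (\<lambda>y. gauss_c (y - c) * Im y ^ k)"
    and "(\<integral>y. gauss_c (y - c) * Im y ^ k \<partial>lborel) = (\<integral>x. phi (Im c) x * x ^ k \<partial>lborel)"
proof -
  have e: "\<And>u v. gauss_c (Complex u v - c) * Im (Complex u v) ^ k = phi (Re c) u * (phi (Im c) v * v ^ k)"
    by (simp add: gauss_c_split)
  note r = cint_prod[OF phi_integrable[of "Re c"] phi_integrable_pow[of "Im c" k] _ e]
  show "integrable lborel (\<lambda>y. gauss_c (y - c) * Im y ^ k)" by (rule r) measurable
  show "(\<integral>y. gauss_c (y - c) * Im y ^ k \<partial>lborel) = (\<integral>x. phi (Im c) x * x ^ k \<partial>lborel)"
    using r(2) by (simp add: phi_int)
qed

lemma cg0: "integrable lborel (\<lambda>y. gauss_c (y - c))" "(\<integral>y. gauss_c (y - c) \<partial>lborel) = 1"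
  using cg_re[of c 0] by (simp_all add: phi_int)

lemma cg_norm2:
  shows "integrable lborel (\<lambda>y. gauss_c (y - c) * (cmod y)\<^sup>2)"
    and "(\<integral>y. gauss_c (y - c) * (cmod y)\<^sup>2 \<partial>lborel) = 1 + (cmod c)\<^sup>2"
proof -
  have e: "(\<lambda>y. gauss_c (y - c) * (cmod y)\<^sup>2) = (\<lambda>y. gauss_c (y - c) * Re y ^ 2 + gauss_c (y - c) * Im y ^ 2)"
    by (auto simp: cmod_power2 algebra_simps)
  show "integrable lborel (\<lambda>y. gauss_c (y - c) * (cmod y)\<^sup>2)"
    unfolding e by (intro Bochner_Integration.integrable_add cg_re(1) cg_im(1))
  show "(\<integral>y. gauss_c (y - c) * (cmod y)\<^sup>2 \<partial>lborel) = 1 + (cmod c)\<^sup>2"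
    unfolding e by (subst Bochner_Integration.integral_add[OF cg_re(1) cg_im(1)]) (simp add: cg_re(2) cg_im(2) phi_m2 cmod_power2)
qed

lemma cg_cnorm2:
  shows "integrable lborel (\<lambda>y. gauss_c (y - c) * (cmod (y - c))\<^sup>2)"
    and "(\<integral>y. gauss_c (y - c) * (cmod (y - c))\<^sup>2 \<partial>lborel) = 1"
proof -
  have e1: "\<And>u v. gauss_c (Complex u v - c) * (Re (Complex u v) - Re c) ^ 2 = (phi (Re c) u * (u - Re c) ^ 2) * phi (Im c) v"
    by (simp add: gauss_c_split)
  note r1 = cint_prod[OF phi_integrable_central[of "Re c" 2] phi_integrable[of "Im c"] _ e1]
  have e2: "\<And>u v. gauss_c (Complex u v - c) * (Im (Complex u v) - Im c) ^ 2 = phi (Re c) u * (phi (Im c) v * (v - Im c) ^ 2)"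
    by (simp add: gauss_c_split)
  note r2 = cint_prod[OF phi_integrable[of "Re c"] phi_integrable_central[of "Im c" 2] _ e2]
  have i1: "integrable lborel (\<lambda>y. gauss_c (y - c) * (Re y - Re c) ^ 2)" by (rule r1) measurable
  have i2: "integrable lborel (\<lambda>y. gauss_c (y - c) * (Im y - Im c) ^ 2)" by (rule r2) measurable
  have v1: "(\<integral>y. gauss_c (y - c) * (Re y - Re c) ^ 2 \<partial>lborel) = 1/2"
    using r1(2) by (simp add: phi_int phi_central) measurable
  have v2: "(\<integral>y. gauss_c (y - c) * (Im y - Im c) ^ 2 \<partial>lborel) = 1/2"
    using r2(2) by (simp add: phi_int phi_central) measurable
  have e: "(\<lambda>y. gauss_c (y - c) * (cmod (y - c))\<^sup>2) = (\<lambda>y. gauss_c (y - c) * (Re y - Re c) ^ 2 + gauss_c (y - c) * (Im y - Im c) ^ 2)"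
    by (auto simp: cmod_power2 algebra_simps)
  show "integrable lborel (\<lambda>y. gauss_c (y - c) * (cmod (y - c))\<^sup>2)"
    unfolding e by (intro Bochner_Integration.integrable_add i1 i2)
  show "(\<integral>y. gauss_c (y - c) * (cmod (y - c))\<^sup>2 \<partial>lborel) = 1"
    unfolding e by (subst Bochner_Integration.integral_add[OF i1 i2]) (simp add: v1 v2)
qed

definition qg :: "real \<Rightarrow> complex \<Rightarrow> real" where
  "qg s y = exp (- (cmod y)\<^sup>2 / s) / (pi * s)"

lemma qg_measurable[measurable]: "qg s \<in> borel_measurable borel"
  unfolding qg_def[abs_def] by measurable

lemma qg_pos: "s > 0 \<Longrightarrow> qg s y > 0" by (simp add: qg_def)

lemma qg_int:
  assumes s: "s > 0"
  shows "integrable lborel (qg s)" "integral\<^sup>L lborel (qg s) = 1"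
proof -
  have sq: "sqrt pi * sqrt s * (sqrt pi * sqrt s) = pi * s" using s
  proof -
    have "sqrt pi * sqrt s * (sqrt pi * sqrt s) = (sqrt pi * sqrt pi) * (sqrt s * sqrt s)" by (simp only: ac_simps)
    also have "\<dots> = pi * s" using s by simp
    finally show ?thesis .
  qed
  have e: "\<And>u v. qg s (Complex u v) = normal_density 0 (sqrt (s/2)) u * normal_density 0 (sqrt (s/2)) v"
    using s by (simp add: qg_def normal_density_def cmod_power2 exp_add[symmetric] real_sqrt_mult
        power_divide add_divide_distrib diff_divide_distrib sq)
  have sp: "0 < sqrt (s/2)" using s by simp
  note r = cint_prod[OF integrable_normal_density[OF sp] integrable_normal_density[OF sp] qg_measurable e]
  show "integrable lborel (qg s)" by (rule r)
  show "integral\<^sup>L lborel (qg s) = 1" using r(2) integral_normal_density[OF sp] by simp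
qed

lemma lists_Suc_eq: "{w::bool list. length w = Suc m} = (\<lambda>(b,w). b # w) ` (UNIV \<times> {w. length w = m})"
  by (auto simp: length_Suc_conv image_iff)

lemma sum_lists_prod:
  "(\<Sum>w\<in>{w::bool list. length w = m}. \<Prod>j<m. h j (w ! j)) = (\<Prod>j<m. h j False + (h j True :: real))"
proof (induction m arbitrary: h)
  case 0
  then show ?case by simp
next
  case (Suc m)
  have inj: "inj_on (\<lambda>(b,w). b # w) (UNIV \<times> {w::bool list. length w = m})"
    by (auto simp: inj_on_def)
  have "(\<Sum>w\<in>{w::bool list. length w = Suc m}. \<Prod>j<Suc m. h j (w ! j))
      = (\<Sum>x\<in>UNIV \<times> {w::bool list. length w = m}. \<Prod>j<Suc m. h j ((fst x # snd x) ! j))"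
    unfolding lists_Suc_eq by (subst sum.reindex[OF inj]) (simp add: case_prod_beta')
  also have "\<dots> = (\<Sum>b\<in>UNIV. \<Sum>w\<in>{w::bool list. length w = m}. h 0 b * (\<Prod>j<m. h (Suc j) (w ! j)))"
    unfolding sum.cartesian_product by (simp del: prod.lessThan_Suc add: prod.lessThan_Suc_shift case_prod_beta')
  also have "\<dots> = (\<Sum>b\<in>UNIV. h 0 b * (\<Prod>j<m. h (Suc j) False + h (Suc j) True))"
    by (simp add: sum_distrib_left[symmetric] Suc.IH[of "\<lambda>j. h (Suc j)"])
  also have "\<dots> = (\<Prod>j<Suc m. h j False + h j True)"
    by (simp del: prod.lessThan_Suc add: prod.lessThan_Suc_shift UNIV_bool algebra_simps)
  finally show ?case .
qed

lemma brgc_props: "length (brgc n) = 2 ^ n \<and> distinct (brgc n) \<and> set (brgc n) = {w. length w = n}"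
proof (induction n)
  case 0
  then show ?case by (auto simp: length_0_conv)
next
  case (Suc n)
  have "set (brgc (Suc n)) = {w. length w = Suc n}"
    using Suc.IH by (auto simp: length_Suc_conv)
  moreover have "distinct (brgc (Suc n))"
    using Suc.IH by (auto simp: distinct_map)
  ultimately show ?case using Suc.IH by simp
qed

lemma bij_brgc: "bij_betw ((!) (brgc n)) {..<2^n} {w. length w = n}"
  using brgc_props[of n] by (intro bij_betw_nth) auto

lemma bij_append: "bij_betw (\<lambda>(a,b). a @ b) ({w::bool list. length w = n} \<times> {w. length w = n}) {w. length w = n + n}"
proof (rule bij_betwI[where g="\<lambda>w. (take n w, drop n w)"])
qed auto

lemma bij_qam_label: "bij_betw (qam_label n) (qam_idx n) {w. length w = n + n}"
proof -
  have "bij_betw (map_prod ((!) (brgc n)) ((!) (brgc n))) (qam_idx n) ({w::bool list. length w = n} \<times> {w. length w = n})"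
    unfolding qam_idx_def by (intro bij_betw_map_prod bij_brgc)
  from bij_betw_trans[OF this bij_append] show ?thesis
    by (simp add: qam_label_def[abs_def] comp_def case_prod_beta' map_prod_def)
qed

lemma sum_filter_bool:
  fixes F :: "'k \<Rightarrow> bool \<Rightarrow> real"
  assumes "finite K"
  shows "(\<Sum>b\<in>UNIV. \<Sum>k\<in>{k\<in>K. lab k = b}. F k b) = (\<Sum>k\<in>K. F k (lab k))"
proof -
  have "(\<Sum>b\<in>UNIV. \<Sum>k\<in>{k\<in>K. lab k = b}. F k b) = (\<Sum>b\<in>UNIV. \<Sum>k\<in>K. if lab k = b then F k b else 0)"
    using assms by (simp add: sum.inter_filter)
  also have "\<dots> = (\<Sum>k\<in>K. \<Sum>b\<in>UNIV. if lab k = b then F k b else 0)" by (rule sum.swap)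
  also have "\<dots> = (\<Sum>k\<in>K. F k (lab k))" by (simp add: UNIV_bool)
  finally show ?thesis .
qed

lemma sum_lists_marg:
  fixes h :: "nat \<Rightarrow> bool \<Rightarrow> real"
  assumes j: "j < m"
  shows "(\<Sum>w\<in>{w::bool list. length w = m}. if w ! j = b then \<Prod>i<m. h i (w ! i) else 0)
         = h j b * (\<Prod>i\<in>{..<m}-{j}. h i False + h i True)"
proof -
  define h' where "h' i c = (if i = j then (if c = b then h i c else 0) else h i c)" for i c
  have "(\<Sum>w\<in>{w::bool list. length w = m}. if w ! j = b then \<Prod>i<m. h i (w ! i) else 0)
      = (\<Sum>w\<in>{w::bool list. length w = m}. \<Prod>i<m. h' i (w ! i))"
  proof (rule sum.cong)
    fix w :: "bool list" assume "w \<in> {w. length w = m}"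
    show "(if w ! j = b then \<Prod>i<m. h i (w ! i) else 0) = (\<Prod>i<m. h' i (w ! i))"
    proof (cases "w ! j = b")
      case True
      then show ?thesis by (auto simp: h'_def intro!: prod.cong)
    next
      case False
      then show ?thesis using j by (auto simp: h'_def intro!: prod_zero[symmetric] bexI[of _ j])
    qed
  qed simp
  also have "\<dots> = (\<Prod>i<m. h' i False + h' i True)" by (rule sum_lists_prod)
  also have "\<dots> = (\<Prod>i<m. if i = j then h j b else h i False + h i True)"
    by (intro prod.cong) (auto simp: h'_def)
  also have "\<dots> = h j b * (\<Prod>i\<in>{..<m}-{j}. h i False + h i True)"
    using j by (subst prod.remove[of _ j]) (auto intro!: prod.cong)
  finally show ?thesis .
qed

lemma sum_lists_marg1:
  fixes h :: "nat \<Rightarrow> bool \<Rightarrow> real"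
  assumes j: "j < m" and one: "\<And>i. h i False + h i True = 1"
  shows "(\<Sum>w\<in>{w::bool list. length w = m}. if w ! j = b then \<Prod>i<m. h i (w ! i) else 0) = h j b"
  using sum_lists_marg[OF j, of b h] one by simp

lemma ln_ge_1_minus_inv: "x > 0 \<Longrightarrow> 1 - 1 / x \<le> ln (x::real)"
proof -
  assume x: "x > 0"
  have "ln (1/x) \<le> 1/x - 1" using x by (intro ln_le_minus_one) auto
  then show ?thesis using x by (simp add: ln_div)
qed

lemma pointwise_chain:
  fixes K :: "'k set" and lab :: "'k \<Rightarrow> bool list" and Q :: "nat \<Rightarrow> bool \<Rightarrow> real" and g :: "'k \<Rightarrow> real"
  assumes fin: "finite K" and bij: "bij_betw lab K {w. length w = m}"
    and Qnn: "\<And>j b. Q j b \<ge> 0" and Q1: "\<And>j. Q j False + Q j True = 1"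
    and gpos: "\<And>k. k \<in> K \<Longrightarrow> g k > 0"
  defines "P \<equiv> \<lambda>k. \<Prod>j<m. Q j (lab k ! j)"
  defines "p \<equiv> \<Sum>k\<in>K. P k * g k"
  defines "J \<equiv> \<lambda>j b. \<Sum>k\<in>{k\<in>K. lab k ! j = b}. P k * g k"
  shows "(\<Sum>j<m. \<Sum>b\<in>UNIV. J j b * ln (J j b / (Q j b * p))) \<le> (\<Sum>k\<in>K. P k * g k * ln (g k)) - p * ln p"
proof -
  define e where "e k = P k * g k" for k
  have Pnn: "P k \<ge> 0" for k unfolding P_def using Qnn by (simp add: prod_nonneg)
  have enn: "k \<in> K \<Longrightarrow> e k \<ge> 0" for k unfolding e_def using Pnn gpos by (simp add: less_imp_le)
  have sumG: "(\<Sum>k\<in>K. G (lab k)) = (\<Sum>w\<in>{w. length w = m}. G w)" for G :: "bool list \<Rightarrow> real"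
    using sum.reindex_bij_betw[OF bij, of G] by simp
  have sumP: "(\<Sum>k\<in>K. P k) = 1"
    unfolding P_def using sumG[of "\<lambda>w. \<Prod>j<m. Q j (w ! j)"] sum_lists_prod[where h=Q and m=m] by (simp add: Q1)
  have ppos: "p > 0"
  proof -
    have "p \<ge> 0" unfolding p_def using enn e_def by (simp add: sum_nonneg)
    moreover have "p \<noteq> 0"
    proof
      assume "p = 0"
      then have "\<forall>k\<in>K. P k * g k = 0" unfolding p_def using enn fin e_def
        by (subst (asm) sum_nonneg_eq_0_iff) auto
      then have "\<forall>k\<in>K. P k = 0" using gpos by (metis less_irrefl mult_eq_0_iff)
      then show False using sumP by simp
    qed
    ultimately show ?thesis by simp
  qed
  define L where "L j b = ln (J j b / (Q j b * p))" for j b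
  have S2: "(\<Sum>b\<in>UNIV. J j b * L j b) = (\<Sum>k\<in>K. e k * L j (lab k ! j))" for j
  proof -
    have "(\<Sum>b\<in>UNIV. J j b * L j b) = (\<Sum>b\<in>UNIV. \<Sum>k\<in>{k\<in>K. lab k ! j = b}. e k * L j b)"
      unfolding J_def e_def by (simp add: sum_distrib_right)
    also have "\<dots> = (\<Sum>k\<in>K. e k * L j (lab k ! j))"
      by (rule sum_filter_bool[OF fin, where lab="\<lambda>k. lab k ! j" and F="\<lambda>k b. e k * L j b"])
    finally show ?thesis .
  qed
  have LHS: "(\<Sum>j<m. \<Sum>b\<in>UNIV. J j b * L j b) = (\<Sum>k\<in>K. e k * (\<Sum>j<m. L j (lab k ! j)))"
    by (simp add: S2 sum_distrib_left) (rule sum.swap)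
  define R where "R k = (\<Prod>j<m. J j (lab k ! j) / p)" for k
  have Jge: "k \<in> K \<Longrightarrow> J j (lab k ! j) \<ge> e k" for k j
    unfolding J_def e_def
    by (rule member_le_sum) (use fin enn[unfolded e_def] in auto)
  have Jnn: "J j b \<ge> 0" for j b
    unfolding J_def using enn[unfolded e_def] by (intro sum_nonneg) auto
  have Rnn: "R k \<ge> 0" for k unfolding R_def using Jnn ppos by (simp add: prod_nonneg)
  have key: "e k * (\<Sum>j<m. L j (lab k ! j)) \<le> e k * (ln (g k) - ln p) + p * R k - e k" if k: "k \<in> K" for k
  proof (cases "e k = 0")
    case True
    then show ?thesis using Rnn[of k] ppos by simp
  next
    case False
    then have ek: "e k > 0" using enn[OF k] by simp
    have Pk: "P k > 0" using ek gpos[OF k] Pnn[of k] unfolding e_def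
      by (metis less_eq_real_def mult_eq_0_iff)
    have Qpos: "Q j (lab k ! j) > 0" if "j < m" for j
    proof -
      have "Q j (lab k ! j) \<noteq> 0"
      proof
        assume "Q j (lab k ! j) = 0"
        then have "P k = 0" unfolding P_def using that by (intro prod_zero) auto
        then show False using Pk by simp
      qed
      then show ?thesis using Qnn[of j "lab k ! j"] by simp
    qed
    have Jpos: "J j (lab k ! j) > 0" for j using Jge[OF k, of j] ek by simp
    have "(\<Sum>j<m. L j (lab k ! j)) = (\<Sum>j<m. ln (J j (lab k ! j) / p) - ln (Q j (lab k ! j)))"
    proof (intro sum.cong refl)
      fix j assume "j \<in> {..<m}"
      then show "L j (lab k ! j) = ln (J j (lab k ! j) / p) - ln (Q j (lab k ! j))"
        unfolding L_def using Jpos[of j] Qpos[of j] ppos by (simp add: ln_div ln_mult)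
    qed
    also have "\<dots> = ln (R k) - ln (P k)"
    proof -
      have "ln (R k) = (\<Sum>j<m. ln (J j (lab k ! j) / p))"
        unfolding R_def using Jpos ppos by (subst ln_prod) (auto simp: less_imp_neq[symmetric])
      moreover have "ln (P k) = (\<Sum>j<m. ln (Q j (lab k ! j)))"
        unfolding P_def using Qpos by (subst ln_prod) (auto simp: less_imp_neq[symmetric])
      ultimately show ?thesis by (simp add: sum_subtractf)
    qed
    finally have eq: "(\<Sum>j<m. L j (lab k ! j)) = ln (R k) - ln (P k)" .
    have Rpos: "R k > 0" unfolding R_def using Jpos ppos by (simp add: prod_pos)
    have "1 - 1 / (e k / (p * R k)) \<le> ln (e k / (p * R k))"
      using ek ppos Rpos by (intro ln_ge_1_minus_inv) simp
    then have "e k * (1 - p * R k / e k) \<le> e k * ln (e k / (p * R k))"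
      using ek by (intro mult_left_mono) auto
    moreover have "ln (e k / (p * R k)) = ln (g k) - ln p - (ln (R k) - ln (P k))"
      using ek ppos Rpos Pk gpos[OF k] unfolding e_def by (simp add: ln_div ln_mult)
    moreover have "e k * (1 - p * R k / e k) = e k - p * R k" using ek by (simp add: field_simps)
    ultimately show ?thesis unfolding eq by (simp add: algebra_simps)
  qed
  have sumR: "(\<Sum>k\<in>K. R k) = 1"
  proof -
    have "(\<Sum>k\<in>K. R k) = (\<Sum>w\<in>{w. length w = m}. \<Prod>j<m. J j (w ! j) / p)"
      unfolding R_def using sumG[of "\<lambda>w. \<Prod>j<m. J j (w ! j) / p"] by simp
    also have "\<dots> = (\<Prod>j<m. J j False / p + J j True / p)" by (rule sum_lists_prod)
    also have "\<dots> = 1"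
    proof (intro prod.neutral ballI)
      fix j assume "j \<in> {..<m}"
      have "J j False + J j True = p"
        unfolding J_def p_def using sum_filter_bool[OF fin, where lab="\<lambda>k. lab k ! j" and F="\<lambda>k b. P k * g k"]
        by (simp add: UNIV_bool)
      then show "J j False / p + J j True / p = 1" using ppos by (simp add: add_divide_distrib[symmetric])
    qed
    finally show ?thesis .
  qed
  have "(\<Sum>j<m. \<Sum>b\<in>UNIV. J j b * L j b) \<le> (\<Sum>k\<in>K. e k * (ln (g k) - ln p) + p * R k - e k)"
    unfolding LHS by (rule sum_mono) (rule key)
  also have "\<dots> = (\<Sum>k\<in>K. e k * ln (g k)) - p * ln p"
    by (simp add: sum.distrib sum_subtractf sum_distrib_right[symmetric] sum_distrib_left[symmetric]
        sumR p_def e_def right_diff_distrib)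
  finally show ?thesis unfolding L_def e_def .
qed

definition Qf :: "nat \<Rightarrow> (nat \<Rightarrow> real) \<Rightarrow> nat \<Rightarrow> bool \<Rightarrow> real" where
  "Qf m p j b = (if j < m then (if b then p j else 1 - p j) else (if b then 0 else 1))"

lemma Qf_nonneg: "shaping_ok m p \<Longrightarrow> Qf m p j b \<ge> 0"
  by (auto simp: Qf_def shaping_ok_def)

lemma Qf_sum: "Qf m p j False + Qf m p j True = 1"
  by (simp add: Qf_def)

lemma sym_prob_Qf: "sym_prob m p k = (\<Prod>j<m. Qf m p j (qam_label (m div 2) k ! j))"
  unfolding sym_prob_def by (intro prod.cong) (auto simp: Qf_def)

lemma bij_lab: "even m \<Longrightarrow> bij_betw (qam_label (m div 2)) (qam_idx (m div 2)) {w. length w = m}"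
  using bij_qam_label[of "m div 2"] by (metis add_self_div_2 evenE mult_2)

lemma finite_qam_idx[simp]: "finite (qam_idx n)"
  by (simp add: qam_idx_def)

lemma sym_prob_nonneg: "shaping_ok m p \<Longrightarrow> sym_prob m p k \<ge> 0"
  unfolding sym_prob_Qf by (intro prod_nonneg) (auto intro: Qf_nonneg)

lemma sum_sym_prob: "even m \<Longrightarrow> (\<Sum>k\<in>qam_idx (m div 2). sym_prob m p k) = 1"
proof -
  assume ev: "even m"
  have "(\<Sum>k\<in>qam_idx (m div 2). sym_prob m p k) = (\<Sum>w\<in>{w. length w = m}. \<Prod>j<m. Qf m p j (w ! j))"
    unfolding sym_prob_Qf using sum.reindex_bij_betw[OF bij_lab[OF ev], of "\<lambda>w. \<Prod>j<m. Qf m p j (w ! j)"] by simp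
  also have "\<dots> = 1" by (subst sum_lists_prod) (simp add: Qf_sum)
  finally show ?thesis .
qed

lemma bit_prob_Qf: "even m \<Longrightarrow> j < m \<Longrightarrow> bit_prob m p j b = Qf m p j b"
proof -
  assume ev: "even m" and j: "j < m"
  have "bit_prob m p j b = (\<Sum>k\<in>qam_idx (m div 2). if qam_label (m div 2) k ! j = b then sym_prob m p k else 0)"
    unfolding bit_prob_def by (simp add: sum.inter_filter)
  also have "\<dots> = (\<Sum>w\<in>{w. length w = m}. if w ! j = b then \<Prod>i<m. Qf m p i (w ! i) else 0)"
    unfolding sym_prob_Qf
    using sum.reindex_bij_betw[OF bij_lab[OF ev], of "\<lambda>w. if w ! j = b then \<Prod>i<m. Qf m p i (w ! i) else 0"] by simp
  also have "\<dots> = Qf m p j b" by (rule sum_lists_marg1[OF j Qf_sum])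
  finally show ?thesis .
qed

lemma sum_sym_norm2:
  assumes ev: "even m" and ok: "shaping_ok m p"
  shows "(\<Sum>k\<in>qam_idx (m div 2). sym_prob m p k * (cmod (norm_point m p k))\<^sup>2) = 1"
proof -
  have V: "sym_var m p > 0" using ok by (simp add: shaping_ok_def)
  have "(\<Sum>k\<in>qam_idx (m div 2). sym_prob m p k * (cmod (norm_point m p k))\<^sup>2)
      = (\<Sum>k\<in>qam_idx (m div 2). sym_prob m p k * (cmod (qam_point (m div 2) k - sym_mean m p))\<^sup>2) / sym_var m p"
    unfolding norm_point_def using V
    by (simp add: sum_divide_distrib norm_divide power_divide abs_of_nonneg)
  also have "\<dots> = 1" using V by (simp add: sym_var_def[symmetric])
  finally show ?thesis .
qed

definition cpt :: "nat \<Rightarrow> (nat \<Rightarrow> real) \<Rightarrow> real \<Rightarrow> nat \<times> nat \<Rightarrow> complex" where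
  "cpt m p snr k = of_real (sqrt snr) * norm_point m p k"

definition RHS :: "nat \<Rightarrow> (nat \<Rightarrow> real) \<Rightarrow> real \<Rightarrow> real \<Rightarrow> complex \<Rightarrow> real" where
  "RHS m p snr s y = (\<Sum>k\<in>qam_idx (m div 2). sym_prob m p k *
      (gauss_c (y - cpt m p snr k) * ((cmod y)\<^sup>2 / s) - gauss_c (y - cpt m p snr k) * (cmod (y - cpt m p snr k))\<^sup>2
       + gauss_c (y - cpt m p snr k) * (ln s - 1))) + qg s y"

definition fjb :: "nat \<Rightarrow> (nat \<Rightarrow> real) \<Rightarrow> real \<Rightarrow> nat \<Rightarrow> bool \<Rightarrow> complex \<Rightarrow> real" where
  "fjb m p snr j b y = joint_dens m p snr j b y * ln (joint_dens m p snr j b y / (bit_prob m p j b * out_dens m p snr y))"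

lemma ln_gauss_c: "ln (gauss_c z) = - (cmod z)\<^sup>2 - ln pi"
  by (simp add: gauss_c_def ln_div)

lemma ln_qg: "s > 0 \<Longrightarrow> ln (qg s y) = - (cmod y)\<^sup>2 / s - ln pi - ln s"
  by (simp add: qg_def ln_div ln_mult)

lemma out_dens_pos:
  assumes ev: "even m" and ok: "shaping_ok m p"
  shows "out_dens m p snr y > 0"
proof -
  have "out_dens m p snr y \<ge> 0" unfolding out_dens_def
    by (intro sum_nonneg mult_nonneg_nonneg sym_prob_nonneg[OF ok]) (simp add: less_imp_le gauss_c_pos)
  moreover have "out_dens m p snr y \<noteq> 0"
  proof
    assume "out_dens m p snr y = 0"
    then have "\<forall>k\<in>qam_idx (m div 2). sym_prob m p k * gauss_c (y - of_real (sqrt snr) * norm_point m p k) = 0"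
      unfolding out_dens_def
      by (subst (asm) sum_nonneg_eq_0_iff) (auto intro!: mult_nonneg_nonneg sym_prob_nonneg[OF ok] less_imp_le[OF gauss_c_pos])
    then have "\<forall>k\<in>qam_idx (m div 2). sym_prob m p k = 0" using gauss_c_pos
      by (metis less_irrefl mult_eq_0_iff)
    then show False using sum_sym_prob[OF ev, of p] by simp
  qed
  ultimately show ?thesis by simp
qed

lemma pointwise_upper:
  assumes ev: "even m" and ok: "shaping_ok m p" and s: "s > 0"
  shows "(\<Sum>j<m. \<Sum>b\<in>UNIV. fjb m p snr j b y) \<le> RHS m p snr s y"
proof -
  let ?K = "qam_idx (m div 2)"
  let ?g = "\<lambda>k. gauss_c (y - cpt m p snr k)"
  have gp: "\<And>k. k \<in> ?K \<Longrightarrow> ?g k > 0" by (simp add: gauss_c_pos)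
  have Qn: "\<And>j b. Qf m p j b \<ge> 0" using Qf_nonneg[OF ok] .
  note A = pointwise_chain[where K="?K" and lab="qam_label (m div 2)" and m=m and Q="Qf m p" and g="?g",
     OF finite_qam_idx bij_lab[OF ev] Qn Qf_sum gp]
  have A': "(\<Sum>j<m. \<Sum>b\<in>UNIV. fjb m p snr j b y) \<le> (\<Sum>k\<in>?K. sym_prob m p k * ?g k * ln (?g k)) - out_dens m p snr y * ln (out_dens m p snr y)"
  proof -
    have "(\<Sum>j<m. \<Sum>b\<in>UNIV. fjb m p snr j b y) = (\<Sum>j<m. \<Sum>b\<in>UNIV. joint_dens m p snr j b y * ln (joint_dens m p snr j b y / (Qf m p j b * out_dens m p snr y)))"
      unfolding fjb_def by (intro sum.cong refl) (simp add: bit_prob_Qf[OF ev])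
    also have "\<dots> \<le> (\<Sum>k\<in>?K. sym_prob m p k * ?g k * ln (?g k)) - out_dens m p snr y * ln (out_dens m p snr y)"
      using A unfolding sym_prob_Qf[symmetric] joint_dens_def out_dens_def cpt_def
      by (simp add: gauss_c_pos)
    finally show ?thesis .
  qed
  define pp where "pp = out_dens m p snr y"
  have pp: "pp > 0" unfolding pp_def by (rule out_dens_pos[OF ev ok])
  have q: "qg s y > 0" by (rule qg_pos[OF s])
  have B: "- pp * ln pp \<le> - pp * ln (qg s y) - pp + qg s y"
  proof -
    have "1 - 1 / (pp / qg s y) \<le> ln (pp / qg s y)" using pp q by (intro ln_ge_1_minus_inv) simp
    then have "pp * (1 - qg s y / pp) \<le> pp * ln (pp / qg s y)" using pp by (intro mult_left_mono) auto
    then show ?thesis using pp q by (simp add: ln_div algebra_simps)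
  qed
  have ppsum: "pp = (\<Sum>k\<in>?K. sym_prob m p k * ?g k)" unfolding pp_def out_dens_def cpt_def ..
  have "(\<Sum>k\<in>?K. sym_prob m p k * ?g k * ln (?g k)) - pp * ln pp
      \<le> (\<Sum>k\<in>?K. sym_prob m p k * ?g k * ln (?g k)) - pp * ln (qg s y) - pp + qg s y" using B by simp
  also have "\<dots> = RHS m p snr s y"
  proof -
    have "(\<Sum>k\<in>?K. sym_prob m p k * ?g k * ln (?g k)) - pp * ln (qg s y) - pp
        = (\<Sum>k\<in>?K. sym_prob m p k * ?g k * (ln (?g k) - ln (qg s y) - 1))"
    proof -
      have "(\<Sum>k\<in>?K. sym_prob m p k * ?g k * (ln (?g k) - ln (qg s y) - 1))
         = (\<Sum>k\<in>?K. sym_prob m p k * ?g k * ln (?g k)) - (\<Sum>k\<in>?K. sym_prob m p k * ?g k * ln (qg s y))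
           - (\<Sum>k\<in>?K. sym_prob m p k * ?g k)"
        by (simp add: sum_subtractf[symmetric] right_diff_distrib)
      also have "(\<Sum>k\<in>?K. sym_prob m p k * ?g k * ln (qg s y)) = pp * ln (qg s y)"
        unfolding ppsum by (simp add: sum_distrib_right)
      finally show ?thesis unfolding ppsum[symmetric] by simp
    qed
    also have "\<dots> = (\<Sum>k\<in>?K. sym_prob m p k *
      (?g k * ((cmod y)\<^sup>2 / s) - ?g k * (cmod (y - cpt m p snr k))\<^sup>2 + ?g k * (ln s - 1)))"
      using s by (intro sum.cong refl) (simp add: ln_gauss_c ln_qg algebra_simps)
    finally show ?thesis unfolding RHS_def by simp
  qed
  finally show ?thesis using A' unfolding pp_def by simp
qed

lemma joint_dens_measurable[measurable]: "joint_dens m p snr j b \<in> borel_measurable borel"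
  unfolding joint_dens_def[abs_def] by measurable

lemma out_dens_measurable[measurable]: "out_dens m p snr \<in> borel_measurable borel"
  unfolding out_dens_def[abs_def] by measurable

lemma fjb_measurable[measurable]: "fjb m p snr j b \<in> borel_measurable borel"
  unfolding fjb_def[abs_def] by measurable

lemma cg0_shift: "integrable lborel (\<lambda>y. c * gauss_c (y - z))"
  using cg0(1)[of z] by simp

lemma out_dens_integrable: "integrable lborel (out_dens m p snr)"
  unfolding out_dens_def[abs_def] by (intro Bochner_Integration.integrable_sum cg0_shift)

lemma joint_le_out:
  assumes ok: "shaping_ok m p"
  shows "0 \<le> joint_dens m p snr j b y \<and> joint_dens m p snr j b y \<le> out_dens m p snr y"
proof -
  have nn: "\<And>k. 0 \<le> sym_prob m p k * gauss_c (y - of_real (sqrt snr) * norm_point m p k)"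
    using sym_prob_nonneg[OF ok] gauss_c_pos by (simp add: less_imp_le)
  show ?thesis unfolding joint_dens_def out_dens_def
    using nn by (auto intro!: sum_nonneg sum_mono2)
qed

lemma fjb_bound:
  assumes ev: "even m" and ok: "shaping_ok m p"
  shows "\<bar>fjb m p snr j b y\<bar> \<le> (1 + \<bar>ln (bit_prob m p j b)\<bar>) * out_dens m p snr y"
proof -
  define J where "J = joint_dens m p snr j b y"
  define B where "B = bit_prob m p j b"
  define Ov where "Ov = out_dens m p snr y"
  have J: "0 \<le> J" "J \<le> Ov" unfolding J_def Ov_def using joint_le_out[OF ok] by auto
  have Ov: "Ov > 0" unfolding Ov_def by (rule out_dens_pos[OF ev ok])
  show ?thesis
  proof (cases "J = 0")
    case True
    then show ?thesis unfolding fjb_def J_def[symmetric] Ov_def[symmetric] using Ov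
      by (simp add: mult_nonneg_nonneg)
  next
    case False
    then have Jp: "J > 0" using J by simp
    have Bnn: "B \<ge> 0" unfolding B_def bit_prob_def by (intro sum_nonneg sym_prob_nonneg[OF ok])
    have "B \<noteq> 0"
    proof
      assume "B = 0"
      then have "\<forall>k\<in>{k\<in>qam_idx (m div 2). qam_label (m div 2) k ! j = b}. sym_prob m p k = 0"
        unfolding B_def bit_prob_def by (subst (asm) sum_nonneg_eq_0_iff) (auto intro: sym_prob_nonneg[OF ok])
      then have "J = 0" unfolding J_def joint_dens_def by (intro sum.neutral) auto
      then show False using Jp by simp
    qed
    then have Bp: "B > 0" using Bnn by simp
    have eq: "fjb m p snr j b y = J * ln (J / Ov) - J * ln B"
      unfolding fjb_def J_def[symmetric] B_def[symmetric] Ov_def[symmetric] using Jp Bp Ov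
      by (simp add: ln_div ln_mult algebra_simps)
    have a1: "J * ln (J / Ov) \<le> 0" using Jp Ov J by (intro mult_nonneg_nonpos) auto
    have "ln (Ov / J) \<le> Ov / J - 1" using Jp Ov by (intro ln_le_minus_one) simp
    then have "J * ln (Ov / J) \<le> J * (Ov / J - 1)" using Jp by (intro mult_left_mono) auto
    moreover have "- (J * ln (J / Ov)) = J * ln (Ov / J)" using Jp Ov by (simp add: ln_div algebra_simps)
    moreover have "J * (Ov / J - 1) = Ov - J" using Jp by (simp add: field_simps)
    ultimately have a2: "- (J * ln (J / Ov)) \<le> Ov" using Jp by linarith
    have a3: "\<bar>J * ln B\<bar> \<le> Ov * \<bar>ln B\<bar>" using J by (simp add: abs_mult mult_right_mono)
    have "\<bar>fjb m p snr j b y\<bar> \<le> \<bar>J * ln (J / Ov)\<bar> + \<bar>J * ln B\<bar>" unfolding eq by (rule abs_triangle_ineq4)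
    also have "\<dots> \<le> Ov + Ov * \<bar>ln B\<bar>" using a1 a2 a3 by simp
    finally show ?thesis unfolding B_def Ov_def by (simp add: algebra_simps)
  qed
qed

lemma fjb_integrable:
  assumes ev: "even m" and ok: "shaping_ok m p"
  shows "integrable lborel (fjb m p snr j b)"
proof (rule Bochner_Integration.integrable_bound)
  show "integrable lborel (\<lambda>y. (1 + \<bar>ln (bit_prob m p j b)\<bar>) * out_dens m p snr y)"
    using out_dens_integrable by (intro Bochner_Integration.integrable_mult_right)
  show "fjb m p snr j b \<in> borel_measurable lborel" by simp
  show "AE y in lborel. norm (fjb m p snr j b y) \<le> norm ((1 + \<bar>ln (bit_prob m p j b)\<bar>) * out_dens m p snr y)"
    using fjb_bound[OF ev ok] out_dens_pos[OF ev ok] by (auto simp: abs_mult less_imp_le)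
qed

lemma hb_inner:
  assumes s: "s > 0"
  shows "has_bochner_integral lborel
     (\<lambda>y. gauss_c (y - c) * ((cmod y)\<^sup>2 / s) - gauss_c (y - c) * (cmod (y - c))\<^sup>2 + gauss_c (y - c) * (ln s - 1))
     ((1 + (cmod c)\<^sup>2) / s - 1 + (ln s - 1))"
proof -
  have h1: "has_bochner_integral lborel (\<lambda>y. gauss_c (y - c) * (cmod y)\<^sup>2) (1 + (cmod c)\<^sup>2)"
    using cg_norm2[of c] by (simp add: has_bochner_integral_iff)
  have h2: "has_bochner_integral lborel (\<lambda>y. gauss_c (y - c) * (cmod (y - c))\<^sup>2) 1"
    using cg_cnorm2[of c] by (simp add: has_bochner_integral_iff)
  have h3: "has_bochner_integral lborel (\<lambda>y. gauss_c (y - c)) 1"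
    using cg0[of c] by (simp add: has_bochner_integral_iff)
  have "has_bochner_integral lborel
     (\<lambda>y. gauss_c (y - c) * (cmod y)\<^sup>2 * (1 / s) - gauss_c (y - c) * (cmod (y - c))\<^sup>2 + gauss_c (y - c) * (ln s - 1))
     ((1 + (cmod c)\<^sup>2) * (1 / s) - 1 + 1 * (ln s - 1))"
    by (intro has_bochner_integral_add has_bochner_integral_diff has_bochner_integral_mult_left h1 h2 h3)
  then show ?thesis by simp
qed

lemma hb_RHS:
  assumes ev: "even m" and ok: "shaping_ok m p" and snr: "snr \<ge> 0"
  shows "has_bochner_integral lborel (RHS m p snr (1 + snr)) (ln (1 + snr))"
proof -
  let ?K = "qam_idx (m div 2)"
  let ?s = "1 + snr"
  have s: "?s > 0" using snr by simp
  have "has_bochner_integral lborel (RHS m p snr ?s)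
     ((\<Sum>k\<in>?K. sym_prob m p k * ((1 + (cmod (cpt m p snr k))\<^sup>2) / ?s - 1 + (ln ?s - 1))) + 1)"
  proof -
    have hq: "has_bochner_integral lborel (qg ?s) 1" using qg_int[OF s] by (simp add: has_bochner_integral_iff)
    show ?thesis unfolding RHS_def
      by (intro has_bochner_integral_add has_bochner_integral_sum has_bochner_integral_mult_right hb_inner[OF s] hq)
  qed
  moreover have "(\<Sum>k\<in>?K. sym_prob m p k * ((1 + (cmod (cpt m p snr k))\<^sup>2) / ?s - 1 + (ln ?s - 1))) + 1 = ln ?s"
  proof -
    have c2: "(cmod (cpt m p snr k))\<^sup>2 = snr * (cmod (norm_point m p k))\<^sup>2" for k
      using snr by (simp add: cpt_def norm_mult power_mult_distrib)
    have "(\<Sum>k\<in>?K. sym_prob m p k * ((1 + (cmod (cpt m p snr k))\<^sup>2) / ?s - 1 + (ln ?s - 1)))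
       = ((\<Sum>k\<in>?K. sym_prob m p k) + snr * (\<Sum>k\<in>?K. sym_prob m p k * (cmod (norm_point m p k))\<^sup>2)) / ?s
         + (\<Sum>k\<in>?K. sym_prob m p k) * (ln ?s - 2)"
    proof -
      have "(\<Sum>k\<in>?K. sym_prob m p k * ((1 + (cmod (cpt m p snr k))\<^sup>2) / ?s - 1 + (ln ?s - 1)))
        = (\<Sum>k\<in>?K. sym_prob m p k * (1 / ?s) + (sym_prob m p k * (cmod (norm_point m p k))\<^sup>2) * (snr / ?s)
             + sym_prob m p k * (ln ?s - 2))"
      proof (intro sum.cong refl)
        fix k
        have e: "\<And>P N t::real. P * ((1 + snr * N) / t - 1 + (ln t - 1)) = P * (1 / t) + P * N * (snr / t) + P * (ln t - 2)"
          by (simp add: add_divide_distrib algebra_simps)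
        show "sym_prob m p k * ((1 + (cmod (cpt m p snr k))\<^sup>2) / ?s - 1 + (ln ?s - 1))
          = sym_prob m p k * (1 / ?s) + (sym_prob m p k * (cmod (norm_point m p k))\<^sup>2) * (snr / ?s)
             + sym_prob m p k * (ln ?s - 2)"
          unfolding c2 by (rule e)
      qed
      also have "\<dots> = (\<Sum>k\<in>?K. sym_prob m p k) * (1 / ?s) + (\<Sum>k\<in>?K. sym_prob m p k * (cmod (norm_point m p k))\<^sup>2) * (snr / ?s)
             + (\<Sum>k\<in>?K. sym_prob m p k) * (ln ?s - 2)"
        by (simp only: sum.distrib sum_distrib_right)
      also have "\<dots> = ((\<Sum>k\<in>?K. sym_prob m p k) + snr * (\<Sum>k\<in>?K. sym_prob m p k * (cmod (norm_point m p k))\<^sup>2)) / ?s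
         + (\<Sum>k\<in>?K. sym_prob m p k) * (ln ?s - 2)"
      proof -
        have gen: "\<And>A B t::real. A * (1/t) + B * (snr/t) + A * (ln t - 2) = (A + snr * B)/t + A*(ln t - 2)"
          by (simp add: add_divide_distrib algebra_simps)
        show ?thesis by (rule gen)
      qed
      finally show ?thesis .
    qed
    also have "\<dots> = ln ?s - 1" using s
      by (simp add: sum_sym_prob[OF ev] sum_sym_norm2[OF ev ok])
    finally show ?thesis by simp
  qed
  ultimately show ?thesis by simp
qed

lemma upper_bound:
  assumes ev: "even m" and ok: "shaping_ok m p" and snr: "snr \<ge> 0"
  shows "(\<Sum>j<m. bit_mi m p snr j) \<le> ln (1 + snr)"
proof -
  have I: "\<And>j b. integrable lborel (fjb m p snr j b)" by (rule fjb_integrable[OF ev ok])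
  have "(\<Sum>j<m. bit_mi m p snr j) = (\<Sum>j<m. \<Sum>b\<in>UNIV. integral\<^sup>L lborel (fjb m p snr j b))"
    unfolding bit_mi_def fjb_def ..
  also have "\<dots> = integral\<^sup>L lborel (\<lambda>y. \<Sum>j<m. \<Sum>b\<in>UNIV. fjb m p snr j b y)"
    using I by (simp add: Bochner_Integration.integral_sum)
  also have "\<dots> \<le> integral\<^sup>L lborel (RHS m p snr (1 + snr))"
    using I hb_RHS[OF ev ok snr] snr
    by (intro Bochner_Integration.integral_mono pointwise_upper[OF ev ok])
       (auto simp: has_bochner_integral_iff)
  also have "\<dots> = ln (1 + snr)" using hb_RHS[OF ev ok snr] by (simp add: has_bochner_integral_iff)
  finally show ?thesis .
qed

lemma length_brgc_nth: "i < 2 ^ n \<Longrightarrow> length (brgc n ! i) = n"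
  using brgc_props[of n] by (metis (mono_tags, lifting) mem_Collect_eq nth_mem)

lemma brgc_Suc_nth:
  assumes "i < 2 ^ Suc k"
  shows "brgc (Suc k) ! i = (if i < 2 ^ k then False # brgc k ! i else True # brgc k ! (2 ^ Suc k - 1 - i))"
proof -
  have L: "length (brgc k) = 2 ^ k" using brgc_props by blast
  show ?thesis
  proof (cases "i < 2 ^ k")
    case True
    then show ?thesis using L by (simp add: nth_append)
  next
    case False
    then have "i - 2 ^ k < 2 ^ k" using assms by simp
    then show ?thesis using False L assms by (simp add: nth_append rev_nth mult_2)
  qed
qed

lemma brgc_nth0: "brgc n ! 0 = replicate n False"
  by (induction n) (auto simp: nth_append brgc_props)

lemma brgc_zero_iff: "i < 2 ^ n \<Longrightarrow> brgc n ! i = replicate n False \<longleftrightarrow> i = 0"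
proof -
  assume i: "i < 2 ^ n"
  have d: "distinct (brgc n)" and L: "length (brgc n) = 2 ^ n" using brgc_props by blast+
  show ?thesis using nth_eq_iff_index_eq[OF d, of i 0] i L brgc_nth0[of n] by auto
qed

lemma brgc_tail_iff:
  assumes i: "i < 2 ^ Suc k"
  shows "(\<forall>j. 0 < j \<and> j < Suc k \<longrightarrow> \<not> brgc (Suc k) ! i ! j) \<longleftrightarrow> i = 0 \<or> i = 2 ^ Suc k - 1"
proof -
  define t where "t = (if i < 2 ^ k then brgc k ! i else brgc k ! (2 ^ Suc k - 1 - i))"
  define i' where "i' = (if i < 2 ^ k then i else 2 ^ Suc k - 1 - i)"
  have i': "i' < 2 ^ k" unfolding i'_def using i by auto
  have t: "t = brgc k ! i'" unfolding t_def i'_def by simp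
  have lt: "length t = k" unfolding t using length_brgc_nth[OF i'] .
  have "(\<forall>j. 0 < j \<and> j < Suc k \<longrightarrow> \<not> brgc (Suc k) ! i ! j) \<longleftrightarrow> (\<forall>j<k. \<not> t ! j)"
    unfolding t_def brgc_Suc_nth[OF i] by (auto simp: less_Suc_eq_0_disj)
  also have "\<dots> \<longleftrightarrow> t = replicate k False"
    using lt by (auto simp: list_eq_iff_nth_eq)
  also have "\<dots> \<longleftrightarrow> i' = 0" unfolding t by (rule brgc_zero_iff[OF i'])
  also have "\<dots> \<longleftrightarrow> i = 0 \<or> i = 2 ^ Suc k - 1" unfolding i'_def using i by auto
  finally show ?thesis .
qed

lemma brgc_head:
  assumes i: "i < 2 ^ Suc k"
  shows "brgc (Suc k) ! i ! 0 \<longleftrightarrow> \<not> i < 2 ^ k"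
  unfolding brgc_Suc_nth[OF i] by simp

declare brgc.simps(2)[simp del]

lemma prod_lessThan_add: "(\<Prod>j<a + b. f j) = (\<Prod>j<a. f j) * (\<Prod>j<b. f (a + j)) " for f :: "nat \<Rightarrow> real"
  by (induction b) (simp_all add: mult.assoc)

definition p0 :: "nat \<Rightarrow> nat \<Rightarrow> real" where
  "p0 m j = (if j = 0 \<or> j = m div 2 then 1/2 else 0)"

definition Cs :: "nat \<Rightarrow> (nat \<times> nat) set" where
  "Cs n = {0, 2 ^ n - 1} \<times> {0, 2 ^ n - 1}"

lemma half_prod:
  assumes a: "a < 2 ^ Suc k"
  shows "(\<Prod>j<Suc k. if j = 0 then 1/2 else (if brgc (Suc k) ! a ! j then 0 else 1)) =
     (if a = 0 \<or> a = 2 ^ Suc k - 1 then 1/2 else (0::real))"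
proof -
  have "(\<Prod>j<Suc k. if j = 0 then 1/2 else (if brgc (Suc k) ! a ! j then 0 else 1))
      = 1/2 * (\<Prod>j<k. if brgc (Suc k) ! a ! Suc j then 0 else (1::real))"
    by (simp add: prod.lessThan_Suc_shift del: prod.lessThan_Suc)
  also have "(\<Prod>j<k. if brgc (Suc k) ! a ! Suc j then 0 else (1::real)) =
      (if (\<forall>j. 0 < j \<and> j < Suc k \<longrightarrow> \<not> brgc (Suc k) ! a ! j) then 1 else 0)"
  proof (cases "\<forall>j. 0 < j \<and> j < Suc k \<longrightarrow> \<not> brgc (Suc k) ! a ! j")
    case True
    then show ?thesis by (auto intro!: prod.neutral)
  next
    case False
    then obtain j where j: "0 < j" "j < Suc k" "brgc (Suc k) ! a ! j" by auto
    then obtain j' where "j = Suc j'" by (cases j) auto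
    with j have "j' \<in> {..<k}" "brgc (Suc k) ! a ! Suc j'" by auto
    then have "(\<Prod>j<k. if brgc (Suc k) ! a ! Suc j then 0 else (1::real)) = 0"
      by (intro prod_zero) auto
    then show ?thesis using False by simp
  qed
  finally have E: "(\<Prod>j<Suc k. if j = 0 then 1/2 else (if brgc (Suc k) ! a ! j then 0 else 1)) =
     1/2 * (if (\<forall>j. 0 < j \<and> j < Suc k \<longrightarrow> \<not> brgc (Suc k) ! a ! j) then 1 else (0::real))" .
  show ?thesis by (subst E, subst brgc_tail_iff[OF a]) simp
qed

lemma sym_p0:
  assumes m: "m = 2 * Suc k" and kk: "kk \<in> qam_idx (Suc k)"
  shows "sym_prob m (p0 m) kk = (if kk \<in> Cs (Suc k) then 1/4 else 0)"
proof -
  obtain a b where kk': "kk = (a, b)" by (cases kk)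
  have a: "a < 2 ^ Suc k" and b: "b < 2 ^ Suc k" using kk kk' by (auto simp: qam_idx_def)
  have md: "m div 2 = Suc k" using m by simp
  have la: "length (brgc (Suc k) ! a) = Suc k" by (rule length_brgc_nth[OF a])
  define f where "f j c = (if c then p0 m j else 1 - p0 m j)" for j c
  have "sym_prob m (p0 m) kk = (\<Prod>j<Suc k + Suc k. f j (qam_label (Suc k) (a, b) ! j))"
    unfolding sym_prob_def f_def kk' md using m by (simp add: mult_2)
  also have "\<dots> = (\<Prod>j<Suc k. f j (brgc (Suc k) ! a ! j)) * (\<Prod>j<Suc k. f (Suc k + j) (brgc (Suc k) ! b ! j))"
    unfolding prod_lessThan_add qam_label_def using la by (simp add: nth_append)
  also have "(\<Prod>j<Suc k. f j (brgc (Suc k) ! a ! j)) = (\<Prod>j<Suc k. if j = 0 then 1/2 else (if brgc (Suc k) ! a ! j then 0 else 1))"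
    by (intro prod.cong refl) (auto simp: f_def p0_def md)
  also have "(\<Prod>j<Suc k. f (Suc k + j) (brgc (Suc k) ! b ! j)) = (\<Prod>j<Suc k. if j = 0 then 1/2 else (if brgc (Suc k) ! b ! j then 0 else 1))"
    by (intro prod.cong refl) (auto simp: f_def p0_def md)
  finally show ?thesis unfolding half_prod[OF a] half_prod[OF b] kk' Cs_def by auto
qed

lemma p0_shaping_range: "\<forall>j<m. 0 \<le> p0 m j \<and> p0 m j \<le> 1"
  by (simp add: p0_def)

lemma Cs_subset: "Cs n \<subseteq> qam_idx n"
  by (auto simp: Cs_def qam_idx_def)

lemma sum_p0:
  assumes m: "m = 2 * Suc k"
  shows "(\<Sum>kk\<in>qam_idx (Suc k). sym_prob m (p0 m) kk * F kk) = (\<Sum>kk\<in>Cs (Suc k). F kk) / 4"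
proof -
  have "(\<Sum>kk\<in>qam_idx (Suc k). sym_prob m (p0 m) kk * F kk) = (\<Sum>kk\<in>qam_idx (Suc k). if kk \<in> Cs (Suc k) then F kk / 4 else 0)"
    by (intro sum.cong refl) (simp add: sym_p0[OF m])
  also have "\<dots> = (\<Sum>kk\<in>qam_idx (Suc k) \<inter> Cs (Suc k). F kk / 4)"
    by (simp add: sum.inter_restrict)
  also have "qam_idx (Suc k) \<inter> Cs (Suc k) = Cs (Suc k)" using Cs_subset by blast
  finally show ?thesis by (simp add: sum_divide_distrib)
qed

context
  fixes k :: nat
begin

definition NNd :: "nat \<Rightarrow> nat" where "NNd k' = 2 ^ Suc k' - 1"
abbreviation "NN \<equiv> NNd k"

lemma NN_pos: "NN \<noteq> 0"
proof -
  have "(1::nat) \<le> 2 ^ k" by simp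
  then have "(2::nat) \<le> 2 ^ Suc k" by simp
  then show ?thesis unfolding NNd_def by linarith
qed

lemma real_NN: "real NN = 2 ^ Suc k - 1"
  unfolding NNd_def by (simp add: of_nat_diff)

lemma real_NN_pos: "real NN > 0" using NN_pos by simp
declare real_NN[simp del]

lemma sum_Cs: "(\<Sum>kk\<in>Cs (Suc k). F kk) = F (0,0) + F (0,NN) + F (NN,0) + F (NN,NN)" for F :: "nat \<times> nat \<Rightarrow> 'a::comm_monoid_add"
proof -
  have "(\<Sum>kk\<in>Cs (Suc k). F kk) = (\<Sum>a\<in>{0,NN}. \<Sum>b\<in>{0,NN}. F (a,b))"
    unfolding Cs_def NNd_def[symmetric] by (simp add: sum.cartesian_product)
  also have "\<dots> = F (0,0) + F (0,NN) + F (NN,0) + F (NN,NN)" using NN_pos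
    by (simp add: add.assoc)
  finally show ?thesis .
qed

lemma pam0: "pam_point (Suc k) 0 = - real NN" by (simp add: pam_point_def real_NN)
lemma pamN: "pam_point (Suc k) NN = real NN" unfolding pam_point_def real_NN by simp

lemma sum_p0c:
  assumes m: "m = 2 * Suc k"
  shows "(\<Sum>kk\<in>qam_idx (Suc k). complex_of_real (sym_prob m (p0 m) kk) * F kk) = (\<Sum>kk\<in>Cs (Suc k). F kk) / 4"
proof -
  have "(\<Sum>kk\<in>qam_idx (Suc k). complex_of_real (sym_prob m (p0 m) kk) * F kk) = (\<Sum>kk\<in>qam_idx (Suc k). if kk \<in> Cs (Suc k) then F kk / 4 else 0)"
    by (intro sum.cong refl) (simp add: sym_p0[OF m])
  also have "\<dots> = (\<Sum>kk\<in>qam_idx (Suc k) \<inter> Cs (Suc k). F kk / 4)"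
    by (simp add: sum.inter_restrict)
  also have "qam_idx (Suc k) \<inter> Cs (Suc k) = Cs (Suc k)" using Cs_subset by blast
  finally show ?thesis by (simp add: sum_divide_distrib)
qed

lemma mean_p0: "m = 2 * Suc k \<Longrightarrow> sym_mean m (p0 m) = 0"
proof -
  assume m: "m = 2 * Suc k"
  have md: "m div 2 = Suc k" using m by simp
  show ?thesis unfolding sym_mean_def md sum_p0c[OF m] sum_Cs
    by (simp add: qam_point_def pam0 pamN complex_eq_iff)
qed

lemma var_p0: "m = 2 * Suc k \<Longrightarrow> sym_var m (p0 m) = 2 * (real NN)\<^sup>2"
proof -
  assume m: "m = 2 * Suc k"
  have md: "m div 2 = Suc k" using m by simp
  show ?thesis unfolding sym_var_def md sum_p0[OF m] sum_Cs mean_p0[OF m]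
    by (simp add: qam_point_def pam0 pamN cmod_power2)
qed

lemma shaping_p0: "m = 2 * Suc k \<Longrightarrow> shaping_ok m (p0 m)"
  unfolding shaping_ok_def using p0_shaping_range[of m] var_p0[of m] real_NN_pos by simp

end

lemma tanh_le_self: "0 \<le> t \<Longrightarrow> tanh t \<le> (t::real)"
proof -
  assume t: "0 \<le> t"
  have "(\<lambda>x. x - tanh x) 0 \<le> (\<lambda>x. x - tanh x) t"
  proof (rule DERIV_nonneg_imp_nondecreasing[OF t])
    fix x :: real
    show "\<exists>y. ((\<lambda>x. x - tanh x) has_field_derivative y) (at x) \<and> 0 \<le> y"
      by (intro exI[of _ "(tanh x)\<^sup>2"] conjI) (auto intro!: derivative_eq_intros simp: cosh_real_pos[THEN less_imp_neq, symmetric])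
  qed
  then show ?thesis by simp
qed

lemma tanh_ge_cubic: "0 \<le> t \<Longrightarrow> t - t^3/3 \<le> tanh (t::real)"
proof -
  assume t: "0 \<le> t"
  have "(\<lambda>x. tanh x - x + x^3/3) 0 \<le> (\<lambda>x. tanh x - x + x^3/3) t"
  proof (rule DERIV_nonneg_imp_nondecreasing[OF t])
    fix x :: real assume x: "0 \<le> x"
    have "(tanh x)\<^sup>2 \<le> x\<^sup>2" using tanh_le_self[OF x] x by (intro power_mono) auto
    then show "\<exists>y. ((\<lambda>x. tanh x - x + x^3/3) has_field_derivative y) (at x) \<and> 0 \<le> y"
      by (intro exI[of _ "x\<^sup>2 - (tanh x)\<^sup>2"] conjI)
         (auto intro!: derivative_eq_intros simp: cosh_real_pos[THEN less_imp_neq, symmetric] power2_eq_square)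
  qed
  then show ?thesis by simp
qed

lemma tanh_le_quintic: "0 \<le> t \<Longrightarrow> tanh (t::real) \<le> t - t^3/3 + 2 * t^5/15"
proof -
  assume t: "0 \<le> t"
  have "(\<lambda>x. x - x^3/3 + 2 * x^5/15 - tanh x) 0 \<le> (\<lambda>x. x - x^3/3 + 2 * x^5/15 - tanh x) t"
  proof (rule DERIV_nonneg_imp_nondecreasing[OF t])
    fix x :: real assume x: "0 \<le> x"
    have key: "x\<^sup>2 - 2 * x^4/3 \<le> (tanh x)\<^sup>2"
    proof (cases "x - x^3/3 \<ge> 0")
      case True
      have "(x - x^3/3)\<^sup>2 \<le> (tanh x)\<^sup>2" using tanh_ge_cubic[OF x] True by (intro power_mono) auto
      moreover have "(x - x^3/3)\<^sup>2 = x\<^sup>2 - 2 * x^4/3 + x^6/9" by (simp add: power2_eq_square algebra_simps eval_nat_numeral)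
      moreover have "x^6/9 \<ge> 0" by simp
      ultimately show ?thesis by linarith
    next
      case False
      then have "x^3 > 3 * x" by simp
      then have "x\<^sup>2 > 3" using x by (cases "x = 0") (auto simp: power3_eq_cube power2_eq_square)
      then have z: "x\<^sup>2 * (2 * x\<^sup>2 / 3 - 1) \<ge> 0" by (intro mult_nonneg_nonneg) auto
      have "x^4 = x\<^sup>2 * x\<^sup>2" by (simp add: power4_eq_xxxx power2_eq_square)
      then have "x\<^sup>2 - 2 * x^4/3 \<le> 0" using z by (simp add: algebra_simps)
      then show ?thesis by (smt (verit) zero_le_power2)
    qed
    show "\<exists>y. ((\<lambda>x. x - x^3/3 + 2 * x^5/15 - tanh x) has_field_derivative y) (at x) \<and> 0 \<le> y"
      apply (intro exI[of _ "(tanh x)\<^sup>2 - x\<^sup>2 + 2 * x^4/3"] conjI)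
       apply (auto intro!: derivative_eq_intros simp: cosh_real_pos[THEN less_imp_neq, symmetric])
      using key by (simp_all add: algebra_simps eval_nat_numeral)
  qed
  then show ?thesis by simp
qed

lemma ln_cosh_le_pos: "0 \<le> t \<Longrightarrow> ln (cosh t) \<le> t\<^sup>2/2 - t^4/12 + t^6/45" for t :: real
proof -
  assume t: "0 \<le> t"
  have "(\<lambda>x. x\<^sup>2/2 - x^4/12 + x^6/45 - ln (cosh x)) 0 \<le> (\<lambda>x. x\<^sup>2/2 - x^4/12 + x^6/45 - ln (cosh x)) t"
  proof (rule DERIV_nonneg_imp_nondecreasing[OF t])
    fix x :: real assume x: "0 \<le> x"
    have c: "cosh x > 0" by (rule cosh_real_pos)
    show "\<exists>y. ((\<lambda>x. x\<^sup>2/2 - x^4/12 + x^6/45 - ln (cosh x)) has_field_derivative y) (at x) \<and> 0 \<le> y"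
      apply (intro exI[of _ "x - x^3/3 + 2 * x^5/15 - tanh x"] conjI)
       apply (auto intro!: derivative_eq_intros simp: c tanh_def)
      using tanh_le_quintic[OF x] c by (simp_all add: algebra_simps eval_nat_numeral tanh_def field_simps)
  qed
  then show ?thesis by simp
qed

lemma ln_cosh_le: "ln (cosh t) \<le> t\<^sup>2/2 - t^4/12 + t^6/45" for t :: real
proof (cases "t \<ge> 0")
  case True
  then show ?thesis by (rule ln_cosh_le_pos)
next
  case False
  then have "ln (cosh (-t)) \<le> (-t)\<^sup>2/2 - (-t)^4/12 + (-t)^6/45" by (intro ln_cosh_le_pos) simp
  then show ?thesis by simp
qed

declare brgc.simps(2)[simp del]

definition sg :: "nat \<Rightarrow> real" where "sg a = (if a = 0 then -1 else 1)"

context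
  fixes k :: nat
begin

lemma pam_corner: "a \<in> {0, NNd k} \<Longrightarrow> pam_point (Suc k) a = sg a * real (NNd k)"
  using pam0[of k] pamN[of k] NN_pos[of k] by (auto simp: sg_def)

lemma cpt_p0:
  assumes m: "m = 2 * Suc k" and a: "a \<in> {0, NNd k}" and b: "b \<in> {0, NNd k}"
  shows "cpt m (p0 m) snr (a, b) = Complex (sg a * (sqrt snr / sqrt 2)) (sg b * (sqrt snr / sqrt 2))"
proof -
  have md: "m div 2 = Suc k" using m by simp
  have R: "real (NNd k) > 0" by (rule real_NN_pos)
  have s: "sqrt (2 * (real (NNd k))\<^sup>2) = sqrt 2 * real (NNd k)" using R by (simp add: real_sqrt_mult)
  show ?thesis
    unfolding cpt_def norm_point_def md mean_p0[OF m] var_p0[OF m] s qam_point_def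
    using R by (simp add: pam_corner[OF a] pam_corner[OF b] complex_eq_iff Complex_eq)
qed

lemma brgc_corner:
  assumes a: "a \<in> {0, NNd k}" and j: "j < Suc k"
  shows "brgc (Suc k) ! a ! j \<longleftrightarrow> (j = 0 \<and> a = NNd k)"
proof -
  have N: "NNd k < 2 ^ Suc k" unfolding NNd_def by simp
  have N2: "\<not> NNd k < 2 ^ k" unfolding NNd_def by simp
  show ?thesis
  proof (cases "a = 0")
    case True
    then show ?thesis using NN_pos[of k] j by (simp add: brgc_nth0 nth_replicate del: replicate_Suc)
  next
    case False
    then have aN: "a = NNd k" using a by simp
    show ?thesis
    proof (cases "j = 0")
      case True
      then show ?thesis using brgc_head[OF N] N2 aN by simp
    next
      case False
      then show ?thesis using brgc_tail_iff[OF N] j aN unfolding NNd_def by auto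
    qed
  qed
qed

lemma label_corner:
  assumes m: "m = 2 * Suc k" and kk: "kk \<in> Cs (Suc k)" and j: "j < m"
  shows "qam_label (Suc k) kk ! j \<longleftrightarrow> (j = 0 \<and> fst kk = NNd k) \<or> (j = Suc k \<and> snd kk = NNd k)"
proof -
  obtain a b where kk': "kk = (a, b)" by (cases kk)
  have a: "a \<in> {0, NNd k}" and b: "b \<in> {0, NNd k}" using kk kk' by (auto simp: Cs_def NNd_def)
  have N: "NNd k < 2 ^ Suc k" unfolding NNd_def by simp
  have la: "length (brgc (Suc k) ! a) = Suc k" using a N by (auto intro: length_brgc_nth)
  show ?thesis
  proof (cases "j < Suc k")
    case True
    then show ?thesis unfolding kk' qam_label_def using la brgc_corner[OF a True] by (auto simp: nth_append)
  next
    case False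
    then have j': "j - Suc k < Suc k" using j m by simp
    show ?thesis unfolding kk' qam_label_def using la brgc_corner[OF b j'] False by (auto simp: nth_append)
  qed
qed

lemma joint_p0:
  assumes m: "m = 2 * Suc k" and j: "j < m"
  shows "joint_dens m (p0 m) snr j bb y =
    (\<Sum>kk\<in>Cs (Suc k). if ((j = 0 \<and> fst kk = NNd k) \<or> (j = Suc k \<and> snd kk = NNd k)) = bb
        then gauss_c (y - cpt m (p0 m) snr kk) else 0) / 4"
proof -
  have md: "m div 2 = Suc k" using m by simp
  have "joint_dens m (p0 m) snr j bb y = (\<Sum>kk\<in>qam_idx (Suc k). sym_prob m (p0 m) kk *
     (if qam_label (Suc k) kk ! j = bb then gauss_c (y - cpt m (p0 m) snr kk) else 0))"
    unfolding joint_dens_def md cpt_def by (subst sum.inter_filter) (auto intro!: sum.cong)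
  also have "\<dots> = (\<Sum>kk\<in>Cs (Suc k). if qam_label (Suc k) kk ! j = bb then gauss_c (y - cpt m (p0 m) snr kk) else 0) / 4"
    by (rule sum_p0[OF m])
  also have "\<dots> = (\<Sum>kk\<in>Cs (Suc k). if ((j = 0 \<and> fst kk = NNd k) \<or> (j = Suc k \<and> snd kk = NNd k)) = bb
        then gauss_c (y - cpt m (p0 m) snr kk) else 0) / 4"
    using label_corner[OF m _ j] by (intro arg_cong[where f="\<lambda>x. x / 4"] sum.cong refl) auto
  finally show ?thesis .
qed

lemma out_p0:
  assumes m: "m = 2 * Suc k"
  shows "out_dens m (p0 m) snr y = (\<Sum>kk\<in>Cs (Suc k). gauss_c (y - cpt m (p0 m) snr kk)) / 4"
proof -
  have md: "m div 2 = Suc k" using m by simp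
  show ?thesis unfolding out_dens_def md cpt_def[symmetric] by (rule sum_p0[OF m])
qed

end

lemma bpsk_pw:
  fixes H u a :: real
  assumes H: "H > 0"
  defines "JT \<equiv> H * exp (-(u - a)\<^sup>2)" and "JF \<equiv> H * exp (-(u + a)\<^sup>2)" and "t \<equiv> 2 * a * u"
  shows "JT * ln (JT / ((1/2) * (JT + JF))) + JF * ln (JF / ((1/2) * (JT + JF)))
         \<ge> t * (JT - JF) - (JT + JF) * (t\<^sup>2/2 - t^4/12 + t^6/45)"
proof -
  define E where "E = H * exp (-(u\<^sup>2 + a\<^sup>2))"
  have E: "E > 0" unfolding E_def using H by simp
  have JT: "JT = E * exp t"
  proof -
    have "-(u - a)\<^sup>2 = -(u\<^sup>2 + a\<^sup>2) + t" unfolding t_def by (simp add: power2_eq_square algebra_simps)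
    then show ?thesis unfolding JT_def E_def by (simp add: exp_add)
  qed
  have JF: "JF = E * exp (-t)"
  proof -
    have "-(u + a)\<^sup>2 = -(u\<^sup>2 + a\<^sup>2) + - t" unfolding t_def by (simp add: power2_eq_square algebra_simps)
    then show ?thesis unfolding JF_def E_def by (metis exp_add mult.assoc)
  qed
  have c: "cosh t > 0" by (rule cosh_real_pos)
  have half: "(1/2) * (JT + JF) = E * cosh t" unfolding JT JF cosh_field_def by (simp add: algebra_simps)
  have l1: "ln (JT / (E * cosh t)) = t - ln (cosh t)"
    unfolding JT using E c by (simp add: ln_div ln_mult)
  have l2: "ln (JF / (E * cosh t)) = - t - ln (cosh t)"
    unfolding JF using E c by (simp add: ln_div ln_mult)
  have eq: "JT * ln (JT / ((1/2) * (JT + JF))) + JF * ln (JF / ((1/2) * (JT + JF)))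
      = t * (JT - JF) - (JT + JF) * ln (cosh t)"
    unfolding half l1 l2 by (simp add: algebra_simps)
  have nn: "JT + JF \<ge> 0" unfolding JT JF using E by simp
  have "(JT + JF) * ln (cosh t) \<le> (JT + JF) * (t\<^sup>2/2 - t^4/12 + t^6/45)"
    using ln_cosh_le[of t] nn by (rule mult_left_mono)
  then show ?thesis unfolding eq by simp
qed

lemma hb_from_cg: "has_bochner_integral lborel (\<lambda>y. gauss_c (y - c) * Re y ^ k) (\<integral>x. phi (Re c) x * x ^ k \<partial>lborel)"
  using cg_re[of c k] by (simp add: has_bochner_integral_iff)

lemma hb_from_cg_im: "has_bochner_integral lborel (\<lambda>y. gauss_c (y - c) * Im y ^ k) (\<integral>x. phi (Im c) x * x ^ k \<partial>lborel)"
  using cg_im[of c k] by (simp add: has_bochner_integral_iff)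

definition Mv :: "real \<Rightarrow> real \<Rightarrow> real \<Rightarrow> real \<Rightarrow> real \<Rightarrow> real" where
  "Mv r \<alpha> \<beta> \<gamma> \<delta> = \<alpha> * r + \<beta> * (r\<^sup>2 + 1/2) + \<gamma> * (r^4 + 3 * r\<^sup>2 + 3/4) + \<delta> * (r^6 + 15/2 * r^4 + 45/4 * r\<^sup>2 + 15/8)"

lemma hb_poly_re:
  "has_bochner_integral lborel (\<lambda>y. gauss_c (y - c) * (\<alpha> * Re y + \<beta> * (Re y)\<^sup>2 + \<gamma> * Re y ^ 4 + \<delta> * Re y ^ 6))
     (Mv (Re c) \<alpha> \<beta> \<gamma> \<delta>)"
proof -
  have "has_bochner_integral lborel (\<lambda>y. \<alpha> * (gauss_c (y - c) * Re y ^ 1) + \<beta> * (gauss_c (y - c) * Re y ^ 2)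
      + \<gamma> * (gauss_c (y - c) * Re y ^ 4) + \<delta> * (gauss_c (y - c) * Re y ^ 6))
     (\<alpha> * (\<integral>x. phi (Re c) x * x ^ 1 \<partial>lborel) + \<beta> * (\<integral>x. phi (Re c) x * x ^ 2 \<partial>lborel)
      + \<gamma> * (\<integral>x. phi (Re c) x * x ^ 4 \<partial>lborel) + \<delta> * (\<integral>x. phi (Re c) x * x ^ 6 \<partial>lborel))"
    by (intro has_bochner_integral_add has_bochner_integral_mult_right hb_from_cg)
  then show ?thesis by (simp add: phi_m1 phi_m2 phi_m4 phi_m6) (simp add: Mv_def algebra_simps)
qed

lemma hb_poly_im:
  "has_bochner_integral lborel (\<lambda>y. gauss_c (y - c) * (\<alpha> * Im y + \<beta> * (Im y)\<^sup>2 + \<gamma> * Im y ^ 4 + \<delta> * Im y ^ 6))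
     (Mv (Im c) \<alpha> \<beta> \<gamma> \<delta>)"
proof -
  have "has_bochner_integral lborel (\<lambda>y. \<alpha> * (gauss_c (y - c) * Im y ^ 1) + \<beta> * (gauss_c (y - c) * Im y ^ 2)
      + \<gamma> * (gauss_c (y - c) * Im y ^ 4) + \<delta> * (gauss_c (y - c) * Im y ^ 6))
     (\<alpha> * (\<integral>x. phi (Im c) x * x ^ 1 \<partial>lborel) + \<beta> * (\<integral>x. phi (Im c) x * x ^ 2 \<partial>lborel)
      + \<gamma> * (\<integral>x. phi (Im c) x * x ^ 4 \<partial>lborel) + \<delta> * (\<integral>x. phi (Im c) x * x ^ 6 \<partial>lborel))"
    by (intro has_bochner_integral_add has_bochner_integral_mult_right hb_from_cg_im)
  then show ?thesis by (simp add: phi_m1 phi_m2 phi_m4 phi_m6) (simp add: Mv_def algebra_simps)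
qed

lemma gauss_corner: "gauss_c (y - Complex p q) = exp (-(Re y - p)\<^sup>2) * exp (-(Im y - q)\<^sup>2) / pi"
  by (simp add: gauss_c_def cmod_power2 exp_add[symmetric])

lemma joint_sum: "joint_dens m p snr j True y + joint_dens m p snr j False y = out_dens m p snr y"
proof -
  have "joint_dens m p snr j True y + joint_dens m p snr j False y =
     (\<Sum>b\<in>UNIV. \<Sum>k\<in>{k\<in>qam_idx (m div 2). qam_label (m div 2) k ! j = b}.
        sym_prob m p k * gauss_c (y - of_real (sqrt snr) * norm_point m p k))"
    unfolding joint_dens_def by (simp add: UNIV_bool add.commute)
  also have "\<dots> = out_dens m p snr y"
    unfolding out_dens_def
    by (rule sum_filter_bool[where lab="\<lambda>k. qam_label (m div 2) k ! j" and F="\<lambda>k b. sym_prob m p k * gauss_c (y - of_real (sqrt snr) * norm_point m p k)", simplified])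
       simp
  finally show ?thesis .
qed

definition LBf :: "real \<Rightarrow> real \<Rightarrow> real" where
  "LBf A u = 2 * A * u - (2 * A\<^sup>2 * u\<^sup>2 - 4 * A^4 / 3 * u^4 + 64 * A^6 / 45 * u^6)"

definition Vf :: "real \<Rightarrow> real" where
  "Vf A = Mv A (2 * A) (- 2 * A\<^sup>2) (4 * A^4 / 3) (- 64 * A^6 / 45)"

lemma LBf_poly: "g * LBf (s * A) u = g * (s * 2 * A * u + (- 2 * A\<^sup>2) * u\<^sup>2 + (4 * A^4 / 3) * u^4 + (- 64 * A^6 / 45) * u^6)"
  if "s\<^sup>2 = 1" for s
  using that by (simp add: LBf_def power_mult_distrib algebra_simps eval_nat_numeral)

lemma Mv_neg: "Mv (- r) (- a) b c d = Mv r a b c d"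
  by (simp add: Mv_def)

lemma hb_LBf_re:
  assumes "s\<^sup>2 = 1"
  shows "has_bochner_integral lborel (\<lambda>y. gauss_c (y - Complex (s * A) q) * LBf (s * A) (Re y)) (Mv (s * A) (s * 2 * A) (- 2 * A\<^sup>2) (4 * A^4 / 3) (- 64 * A^6 / 45))"
  using hb_poly_re[of "Complex (s * A) q" "s * 2 * A" "- 2 * A\<^sup>2" "4 * A^4 / 3" "- 64 * A^6 / 45"]
  by (simp add: LBf_poly[OF assms])

lemma hb_LBf_im:
  assumes "s\<^sup>2 = 1"
  shows "has_bochner_integral lborel (\<lambda>y. gauss_c (y - Complex q (s * A)) * LBf (s * A) (Im y)) (Mv (s * A) (s * 2 * A) (- 2 * A\<^sup>2) (4 * A^4 / 3) (- 64 * A^6 / 45))"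
  using hb_poly_im[of "Complex q (s * A)" "s * 2 * A" "- 2 * A\<^sup>2" "4 * A^4 / 3" "- 64 * A^6 / 45"]
  by (simp add: LBf_poly[OF assms])

context
  fixes k m :: nat and snr :: real
  assumes m: "m = 2 * Suc k" and snr: "snr \<ge> 0"
begin

definition "Aa = sqrt snr / sqrt 2"

lemma ev_m: "even m" using m by simp

lemma cpts:
  "cpt m (p0 m) snr (0,0) = Complex (- Aa) (- Aa)"
  "cpt m (p0 m) snr (0,NNd k) = Complex (- Aa) Aa"
  "cpt m (p0 m) snr (NNd k,0) = Complex Aa (- Aa)"
  "cpt m (p0 m) snr (NNd k,NNd k) = Complex Aa Aa"
  using cpt_p0[OF m, of _ _ snr] NN_pos[of k] by (auto simp: sg_def Aa_def)

lemma bitp0: "j = 0 \<or> j = Suc k \<Longrightarrow> bit_prob m (p0 m) j b = 1/2"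
  using bit_prob_Qf[OF ev_m, of j "p0 m" b] m by (auto simp: Qf_def p0_def)

lemma joint0:
  "joint_dens m (p0 m) snr 0 True y = (gauss_c (y - Complex Aa (- Aa)) + gauss_c (y - Complex Aa Aa)) / 4"
  "joint_dens m (p0 m) snr 0 False y = (gauss_c (y - Complex (- Aa) (- Aa)) + gauss_c (y - Complex (- Aa) Aa)) / 4"
proof -
  have j: "0 < m" using m by simp
  show "joint_dens m (p0 m) snr 0 True y = (gauss_c (y - Complex Aa (- Aa)) + gauss_c (y - Complex Aa Aa)) / 4"
    "joint_dens m (p0 m) snr 0 False y = (gauss_c (y - Complex (- Aa) (- Aa)) + gauss_c (y - Complex (- Aa) Aa)) / 4"
    using joint_p0[OF m j, where snr=snr] NN_pos[of k] by (simp_all add: sum_Cs cpts)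
qed

lemma jointn:
  "joint_dens m (p0 m) snr (Suc k) True y = (gauss_c (y - Complex (- Aa) Aa) + gauss_c (y - Complex Aa Aa)) / 4"
  "joint_dens m (p0 m) snr (Suc k) False y = (gauss_c (y - Complex (- Aa) (- Aa)) + gauss_c (y - Complex Aa (- Aa))) / 4"
proof -
  have j: "Suc k < m" using m by simp
  show "joint_dens m (p0 m) snr (Suc k) True y = (gauss_c (y - Complex (- Aa) Aa) + gauss_c (y - Complex Aa Aa)) / 4"
    "joint_dens m (p0 m) snr (Suc k) False y = (gauss_c (y - Complex (- Aa) (- Aa)) + gauss_c (y - Complex Aa (- Aa))) / 4"
    using joint_p0[OF m j, where snr=snr] NN_pos[of k] by (simp_all add: sum_Cs cpts)
qed

end

context
  fixes k m :: nat and snr :: real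
  assumes m: "m = 2 * Suc k" and snr: "snr \<ge> 0"
begin

lemma hb4_re:
  "has_bochner_integral lborel (\<lambda>y. (gauss_c (y - Complex (Aa snr) (- Aa snr)) * LBf (Aa snr) (Re y)
     + gauss_c (y - Complex (Aa snr) (Aa snr)) * LBf (Aa snr) (Re y)
     + gauss_c (y - Complex (- Aa snr) (- Aa snr)) * LBf (- Aa snr) (Re y)
     + gauss_c (y - Complex (- Aa snr) (Aa snr)) * LBf (- Aa snr) (Re y)) / 4) (Vf (Aa snr))"
proof -
  let ?A = "Aa snr"
  let ?V = "Mv ?A (2 * ?A) (- 2 * ?A\<^sup>2) (4 * ?A^4 / 3) (- 64 * ?A^6 / 45)"
  have p1: "has_bochner_integral lborel (\<lambda>y. gauss_c (y - Complex ?A q) * LBf ?A (Re y)) ?V" for q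
    using hb_LBf_re[of 1 ?A q] by simp
  have p2: "has_bochner_integral lborel (\<lambda>y. gauss_c (y - Complex (- ?A) q) * LBf (- ?A) (Re y)) ?V" for q
    using hb_LBf_re[of "-1" ?A q] by (simp add: Mv_neg[of ?A "2 * ?A", simplified])
  have "has_bochner_integral lborel (\<lambda>y. (gauss_c (y - Complex ?A (- ?A)) * LBf ?A (Re y)
     + gauss_c (y - Complex ?A ?A) * LBf ?A (Re y)
     + gauss_c (y - Complex (- ?A) (- ?A)) * LBf (- ?A) (Re y)
     + gauss_c (y - Complex (- ?A) ?A) * LBf (- ?A) (Re y)) / 4) ((?V + ?V + ?V + ?V) / 4)"
    by (intro has_bochner_integral_divide_zero has_bochner_integral_add p1 p2)
  then show ?thesis by (simp add: Vf_def)
qed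

lemma pw0:
  "fjb m (p0 m) snr 0 False y + fjb m (p0 m) snr 0 True y \<ge>
    (gauss_c (y - Complex (Aa snr) (- Aa snr)) * LBf (Aa snr) (Re y)
     + gauss_c (y - Complex (Aa snr) (Aa snr)) * LBf (Aa snr) (Re y)
     + gauss_c (y - Complex (- Aa snr) (- Aa snr)) * LBf (- Aa snr) (Re y)
     + gauss_c (y - Complex (- Aa snr) (Aa snr)) * LBf (- Aa snr) (Re y)) / 4"
proof -
  let ?A = "Aa snr"
  define u where "u = Re y"
  define v where "v = Im y"
  define H where "H = (exp (-(v + ?A)\<^sup>2) + exp (-(v - ?A)\<^sup>2)) / (4 * pi)"
  have H: "H > 0" unfolding H_def by (simp add: add_pos_pos)
  define JT where "JT = joint_dens m (p0 m) snr 0 True y"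
  define JF where "JF = joint_dens m (p0 m) snr 0 False y"
  have JT: "JT = H * exp (-(u - ?A)\<^sup>2)"
    unfolding JT_def joint0[OF m snr] gauss_corner H_def u_def v_def by (simp add: field_simps)
  have JF: "JF = H * exp (-(u + ?A)\<^sup>2)"
    unfolding JF_def joint0[OF m snr] gauss_corner H_def u_def v_def by (simp add: field_simps)
  have out: "out_dens m (p0 m) snr y = JT + JF" unfolding JT_def JF_def by (rule joint_sum[symmetric])
  have lhs: "fjb m (p0 m) snr 0 False y + fjb m (p0 m) snr 0 True y =
      JT * ln (JT / ((1/2) * (JT + JF))) + JF * ln (JF / ((1/2) * (JT + JF)))"
  proof -
    have b0: "bit_prob m (p0 m) 0 b = 1/2" for b using bitp0[OF m snr, of 0 b] by simp
    show ?thesis unfolding fjb_def out JT_def[symmetric] JF_def[symmetric] b0 by simp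
  qed
  define t where "t = 2 * ?A * u"
  have B: "JT * ln (JT / ((1/2) * (JT + JF))) + JF * ln (JF / ((1/2) * (JT + JF)))
         \<ge> t * (JT - JF) - (JT + JF) * (t\<^sup>2/2 - t^4/12 + t^6/45)"
    unfolding JT JF t_def by (rule bpsk_pw[OF H])
  have e: "t * (JT - JF) - (JT + JF) * (t\<^sup>2/2 - t^4/12 + t^6/45) = JT * LBf ?A u + JF * LBf (- ?A) u"
    unfolding t_def LBf_def by (simp add: field_simps power_mult_distrib eval_nat_numeral)
  have e2: "JT * LBf ?A u + JF * LBf (- ?A) u =
    (gauss_c (y - Complex ?A (- ?A)) * LBf ?A (Re y)
     + gauss_c (y - Complex ?A ?A) * LBf ?A (Re y)
     + gauss_c (y - Complex (- ?A) (- ?A)) * LBf (- ?A) (Re y)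
     + gauss_c (y - Complex (- ?A) ?A) * LBf (- ?A) (Re y)) / 4"
    unfolding JT_def JF_def joint0[OF m snr] u_def by (simp add: algebra_simps add_divide_distrib)
  show ?thesis using B unfolding lhs e e2 .
qed

lemma bit0_lower: "bit_mi m (p0 m) snr 0 \<ge> Vf (Aa snr)"
proof -
  have ok: "shaping_ok m (p0 m)" by (rule shaping_p0[OF m])
  have ev: "even m" using m by simp
  have I: "integrable lborel (fjb m (p0 m) snr 0 b)" for b by (rule fjb_integrable[OF ev ok])
  have "bit_mi m (p0 m) snr 0 = integral\<^sup>L lborel (fjb m (p0 m) snr 0 False) + integral\<^sup>L lborel (fjb m (p0 m) snr 0 True)"
    unfolding bit_mi_def fjb_def by (simp add: UNIV_bool)
  also have "\<dots> = (\<integral>y. fjb m (p0 m) snr 0 False y + fjb m (p0 m) snr 0 True y \<partial>lborel)"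
    by (rule Bochner_Integration.integral_add[OF I I, symmetric])
  also have "\<dots> \<ge> Vf (Aa snr)"
    using hb4_re Bochner_Integration.integral_mono[OF _ Bochner_Integration.integrable_add[OF I I] pw0]
    by (auto simp: has_bochner_integral_iff)
  finally show ?thesis .
qed

lemma hb4_im:
  "has_bochner_integral lborel (\<lambda>y. (gauss_c (y - Complex (- Aa snr) (Aa snr)) * LBf (Aa snr) (Im y)
     + gauss_c (y - Complex (Aa snr) (Aa snr)) * LBf (Aa snr) (Im y)
     + gauss_c (y - Complex (- Aa snr) (- Aa snr)) * LBf (- Aa snr) (Im y)
     + gauss_c (y - Complex (Aa snr) (- Aa snr)) * LBf (- Aa snr) (Im y)) / 4) (Vf (Aa snr))"
proof -
  let ?A = "Aa snr"
  let ?V = "Mv ?A (2 * ?A) (- 2 * ?A\<^sup>2) (4 * ?A^4 / 3) (- 64 * ?A^6 / 45)"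
  have p1: "has_bochner_integral lborel (\<lambda>y. gauss_c (y - Complex q ?A) * LBf ?A (Im y)) ?V" for q
    using hb_LBf_im[of 1 q ?A] by simp
  have p2: "has_bochner_integral lborel (\<lambda>y. gauss_c (y - Complex q (- ?A)) * LBf (- ?A) (Im y)) ?V" for q
    using hb_LBf_im[of "-1" q ?A] by (simp add: Mv_neg[of ?A "2 * ?A", simplified])
  have "has_bochner_integral lborel (\<lambda>y. (gauss_c (y - Complex (- ?A) ?A) * LBf ?A (Im y)
     + gauss_c (y - Complex ?A ?A) * LBf ?A (Im y)
     + gauss_c (y - Complex (- ?A) (- ?A)) * LBf (- ?A) (Im y)
     + gauss_c (y - Complex ?A (- ?A)) * LBf (- ?A) (Im y)) / 4) ((?V + ?V + ?V + ?V) / 4)"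
    by (intro has_bochner_integral_divide_zero has_bochner_integral_add p1 p2)
  then show ?thesis by (simp add: Vf_def)
qed

lemma pwn:
  "fjb m (p0 m) snr (Suc k) False y + fjb m (p0 m) snr (Suc k) True y \<ge>
    (gauss_c (y - Complex (- Aa snr) (Aa snr)) * LBf (Aa snr) (Im y)
     + gauss_c (y - Complex (Aa snr) (Aa snr)) * LBf (Aa snr) (Im y)
     + gauss_c (y - Complex (- Aa snr) (- Aa snr)) * LBf (- Aa snr) (Im y)
     + gauss_c (y - Complex (Aa snr) (- Aa snr)) * LBf (- Aa snr) (Im y)) / 4"
proof -
  let ?A = "Aa snr"
  define u where "u = Im y"
  define v where "v = Re y"
  define H where "H = (exp (-(v + ?A)\<^sup>2) + exp (-(v - ?A)\<^sup>2)) / (4 * pi)"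
  have H: "H > 0" unfolding H_def by (simp add: add_pos_pos)
  define JT where "JT = joint_dens m (p0 m) snr (Suc k) True y"
  define JF where "JF = joint_dens m (p0 m) snr (Suc k) False y"
  have JT: "JT = H * exp (-(u - ?A)\<^sup>2)"
    unfolding JT_def jointn[OF m snr] gauss_corner H_def u_def v_def by (simp add: field_simps)
  have JF: "JF = H * exp (-(u + ?A)\<^sup>2)"
    unfolding JF_def jointn[OF m snr] gauss_corner H_def u_def v_def by (simp add: field_simps)
  have out: "out_dens m (p0 m) snr y = JT + JF" unfolding JT_def JF_def by (rule joint_sum[symmetric])
  have lhs: "fjb m (p0 m) snr (Suc k) False y + fjb m (p0 m) snr (Suc k) True y =
      JT * ln (JT / ((1/2) * (JT + JF))) + JF * ln (JF / ((1/2) * (JT + JF)))"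
  proof -
    have b0: "bit_prob m (p0 m) (Suc k) b = 1/2" for b using bitp0[OF m snr, of "Suc k" b] by simp
    show ?thesis unfolding fjb_def out JT_def[symmetric] JF_def[symmetric] b0 by simp
  qed
  define t where "t = 2 * ?A * u"
  have B: "JT * ln (JT / ((1/2) * (JT + JF))) + JF * ln (JF / ((1/2) * (JT + JF)))
         \<ge> t * (JT - JF) - (JT + JF) * (t\<^sup>2/2 - t^4/12 + t^6/45)"
    unfolding JT JF t_def by (rule bpsk_pw[OF H])
  have e: "t * (JT - JF) - (JT + JF) * (t\<^sup>2/2 - t^4/12 + t^6/45) = JT * LBf ?A u + JF * LBf (- ?A) u"
    unfolding t_def LBf_def by (simp add: field_simps power_mult_distrib eval_nat_numeral)
  have e2: "JT * LBf ?A u + JF * LBf (- ?A) u =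
    (gauss_c (y - Complex (- ?A) ?A) * LBf ?A (Im y)
     + gauss_c (y - Complex ?A ?A) * LBf ?A (Im y)
     + gauss_c (y - Complex (- ?A) (- ?A)) * LBf (- ?A) (Im y)
     + gauss_c (y - Complex ?A (- ?A)) * LBf (- ?A) (Im y)) / 4"
    unfolding JT_def JF_def jointn[OF m snr] u_def by (simp add: algebra_simps add_divide_distrib)
  show ?thesis using B unfolding lhs e e2 .
qed

lemma bitn_lower: "bit_mi m (p0 m) snr (Suc k) \<ge> Vf (Aa snr)"
proof -
  have ok: "shaping_ok m (p0 m)" by (rule shaping_p0[OF m])
  have ev: "even m" using m by simp
  have I: "integrable lborel (fjb m (p0 m) snr (Suc k) b)" for b by (rule fjb_integrable[OF ev ok])
  have "bit_mi m (p0 m) snr (Suc k) = integral\<^sup>L lborel (fjb m (p0 m) snr (Suc k) False) + integral\<^sup>L lborel (fjb m (p0 m) snr (Suc k) True)"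
    unfolding bit_mi_def fjb_def by (simp add: UNIV_bool)
  also have "\<dots> = (\<integral>y. fjb m (p0 m) snr (Suc k) False y + fjb m (p0 m) snr (Suc k) True y \<partial>lborel)"
    by (rule Bochner_Integration.integral_add[OF I I, symmetric])
  also have "\<dots> \<ge> Vf (Aa snr)"
    using hb4_im Bochner_Integration.integral_mono[OF _ Bochner_Integration.integrable_add[OF I I] pwn]
    by (auto simp: has_bochner_integral_iff)
  finally show ?thesis .
qed

end

context
  fixes k m :: nat and snr :: real
  assumes m: "m = 2 * Suc k" and snr: "snr \<ge> 0"
begin

lemma bit_other:
  assumes j: "j < m" "j \<noteq> 0" "j \<noteq> Suc k"
  shows "bit_mi m (p0 m) snr j = 0"
proof -
  have ev: "even m" using m by simp
  have JT: "joint_dens m (p0 m) snr j True y = 0" for y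
    using joint_p0[OF m j(1), where snr=snr and bb=True and y=y] j by simp
  have JF: "joint_dens m (p0 m) snr j False y = out_dens m (p0 m) snr y" for y
    using joint_p0[OF m j(1), where snr=snr and bb=False and y=y] j out_p0[OF m, where snr=snr and y=y] by simp
  have BF: "bit_prob m (p0 m) j False = 1"
    using bit_prob_Qf[OF ev j(1), of "p0 m" False] j m by (simp add: Qf_def p0_def)
  have O: "out_dens m (p0 m) snr y \<noteq> 0" for y using out_dens_pos[OF ev shaping_p0[OF m]] by (metis less_irrefl)
  show ?thesis unfolding bit_mi_def by (simp add: UNIV_bool JT JF BF O)
qed

lemma sum_lower: "(\<Sum>j<m. bit_mi m (p0 m) snr j) \<ge> 2 * Vf (Aa snr)"
proof -
  have "(\<Sum>j<m. bit_mi m (p0 m) snr j) = (\<Sum>j<m. (if j = 0 then bit_mi m (p0 m) snr 0 else 0) + (if j = Suc k then bit_mi m (p0 m) snr (Suc k) else 0))"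
    using bit_other by (intro sum.cong refl) auto
  also have "\<dots> = bit_mi m (p0 m) snr 0 + bit_mi m (p0 m) snr (Suc k)"
    using m by (simp add: sum.distrib)
  finally show ?thesis using bit0_lower[OF m snr] bitn_lower[OF m snr] by simp
qed

lemma C_bounds: "2 * Vf (Aa snr) \<le> C_bicm m snr \<and> C_bicm m snr \<le> ln (1 + snr)"
proof -
  have ev: "even m" using m by simp
  let ?S = "(\<lambda>p. \<Sum>j<m. bit_mi m p snr j) ` {p. shaping_ok m p}"
  have mem: "(\<Sum>j<m. bit_mi m (p0 m) snr j) \<in> ?S" using shaping_p0[OF m] by blast
  have ub: "\<And>x. x \<in> ?S \<Longrightarrow> x \<le> ln (1 + snr)" using upper_bound[OF ev _ snr] by auto
  have bdd: "bdd_above ?S" by (rule bdd_aboveI[where M="ln (1 + snr)"]) (rule ub)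
  have "C_bicm m snr \<le> ln (1 + snr)" unfolding C_bicm_def using mem ub by (intro cSup_least) auto
  moreover have "(\<Sum>j<m. bit_mi m (p0 m) snr j) \<le> C_bicm m snr" unfolding C_bicm_def using mem bdd by (rule cSup_upper)
  ultimately show ?thesis using sum_lower by simp
qed

end

lemma ln_upper3: "x \<ge> 0 \<Longrightarrow> ln (1 + x) \<le> x - x\<^sup>2/2 + x^3/3" for x :: real
proof -
  assume x: "x \<ge> 0"
  have "(\<lambda>x. x - x\<^sup>2/2 + x^3/3 - ln (1 + x)) 0 \<le> (\<lambda>x. x - x\<^sup>2/2 + x^3/3 - ln (1 + x)) x"
  proof (rule DERIV_nonneg_imp_nondecreasing[OF x])
    fix t :: real assume t: "0 \<le> t"
    have "0 \<le> t^3 / (1 + t)" using t by simp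
    moreover have "1 - t + t\<^sup>2 - 1 / (1 + t) = t^3 / (1 + t)" using t
      by (simp add: field_simps power2_eq_square power3_eq_cube)
    ultimately show "\<exists>y. ((\<lambda>x. x - x\<^sup>2/2 + x^3/3 - ln (1 + x)) has_field_derivative y) (at t) \<and> 0 \<le> y"
      using t by (intro exI[of _ "1 - t + t\<^sup>2 - 1 / (1 + t)"] conjI)
        (auto intro!: derivative_eq_intros simp: power2_eq_square)
  qed
  then show ?thesis by simp
qed

lemma Vf_poly: "Vf A = A\<^sup>2 - A^4 + 4/3 * A^6 - 44/3 * A^8 - 32/3 * A^10 - 64/45 * A^12"
  by (simp add: Vf_def Mv_def algebra_simps eval_nat_numeral)

lemma Vf_lower: "0 \<le> A\<^sup>2 \<Longrightarrow> A\<^sup>2 \<le> 1 \<Longrightarrow> Vf A \<ge> A\<^sup>2 - A^4 - 27 * A^6"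
proof -
  assume a: "0 \<le> A\<^sup>2" "A\<^sup>2 \<le> 1"
  define x where "x = A\<^sup>2"
  have x: "0 \<le> x" "x \<le> 1" using a unfolding x_def by auto
  have p: "A^4 = x^2" "A^6 = x^3" "A^8 = x^4" "A^10 = x^5" "A^12 = x^6"
    unfolding x_def by (simp_all add: power_mult[symmetric])
  have "x^4 \<le> x^3" "x^5 \<le> x^3" "x^6 \<le> x^3" using x by (auto intro: power_decreasing)
  moreover have "x^3 \<ge> 0" using x by simp
  ultimately show ?thesis unfolding Vf_poly p x_def[symmetric] by linarith
qed

theorem theorem2:
  fixes m :: nat
  assumes "even m" and "m \<ge> 2"
  shows "(\<lambda>snr. C_bicm m snr - (1 * snr + (- 1 / 2) * snr ^ 2)) \<in> o[at_right 0](\<lambda>snr. snr ^ 2)"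
proof -
  obtain q where q: "m = 2 * q" using assms(1) by blast
  then obtain k where m: "m = 2 * Suc k" using assms(2) by (cases q) auto
  have ev: "eventually (\<lambda>s. norm (C_bicm m s - (1 * s + (- 1 / 2) * s ^ 2)) \<le> 7 * norm (s ^ 3)) (at_right (0::real))"
    unfolding eventually_at_right_field
  proof (intro exI[of _ 1] conjI allI impI)
    fix s :: real assume s: "0 < s" "s < 1"
    note CB = C_bounds[OF m, of s]
    have u: "C_bicm m s \<le> s - s\<^sup>2/2 + s^3/3" using CB ln_upper3[of s] s by simp
    have A2: "(Aa s)\<^sup>2 = s / 2" using s by (simp add: Aa_def power_divide)
    have A4: "(Aa s)^4 = (s/2)\<^sup>2" by (metis A2 power_mult[symmetric] num_double numeral_times_numeral mult.commute power_mult)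
    have A6: "(Aa s)^6 = (s/2)^3" by (metis A2 power_mult[symmetric] mult.commute numeral_times_numeral num_double semiring_norm(5) power_mult)
    have "Vf (Aa s) \<ge> (Aa s)\<^sup>2 - (Aa s)^4 - 27 * (Aa s)^6" using A2 s by (intro Vf_lower) auto
    then have "Vf (Aa s) \<ge> s/2 - s\<^sup>2/4 - 27 * s^3 / 8" unfolding A4 A6 A2 by (simp add: power_divide)
    then have l: "C_bicm m s \<ge> s - s\<^sup>2/2 - 27 * s^3 / 4" using CB s by simp
    have s3: "s^3 > 0" using s by simp
    show "norm (C_bicm m s - (1 * s + (- 1 / 2) * s ^ 2)) \<le> 7 * norm (s ^ 3)"
      using u l s3 by (simp add: abs_le_iff)
  qed simp
  have "(\<lambda>snr. C_bicm m snr - (1 * snr + (- 1 / 2) * snr ^ 2)) \<in> O[at_right 0](\<lambda>s. s ^ 3)"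
    by (rule bigoI[OF ev])
  moreover have "(\<lambda>s::real. s ^ 3) \<in> o[at_right 0](\<lambda>s. s ^ 2)" by real_asymp
  ultimately show ?thesis by (rule landau_o.big_small_trans)
qed

end
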